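(* Let $(H,A,C)$ be a Doi-Hopf datum. Make $D=C^{\mathrm{cop}}\otimes C$ a right $H$-module coalgebra via $(c\otimes d)\cdot h=c\otimes d\cdot h$, and consider Koppinen's algebra $\#(D,A)$. Then $V_3\subseteq\#(D,A)$ is closed under the multiplication $\bullet$, and for $\theta,\theta'\in V_3$, $$(\theta\bullet\theta')(c\otimes d)=\sum\theta(c_{(3)}\otimes d)\,\theta'(c_{(1)}\otimes c_{(2)}).$$ Every normalized element of $V_3$ is a right unit of $V_3$ (i.e. $\theta'\bullet\theta=\theta'$ for all $\theta'\in V_3$), and in particular is idempotent.
   Context: Sweedler notation $\Delta(c)=\sum c_{(1)}\otimes c_{(2)}$, $\rho(m)=\sum m_{<-1>}\otimes m_{<0>}$. Doi-Hopf datum $(H,A,C)$: $H$ bialgebra, $A$ left $H$-comodule algebra, $C$ right $H$-module coalgebra, $C$ flat over the commutative ring $k$. For a right $H$-module coalgebra $D$, Koppinen's smash product $\#(D,A)$ is $\mathrm{Hom}(D,A)$ with product $(f\bullet g)(x)=\sum f(x_{(1)})_{<0>}\,g\big(x_{(2)}\cdot f(x_{(1)})_{<-1>}\big)$ and unit $x\mapsto\varepsilon(x)1_A$; in $C^{\mathrm{cop}}\otimes C$, $\Delta(c\otimes d)=\sum(c_{(2)}\otimes d_{(1)})\otimes(c_{(1)}\otimes d_{(2)})$. $V_3$ is the set of $k$-linear $\theta:C\otimes C\to A$ such that for all $a\in A$, $c,d\in C$: $\theta(c\otimes d)a=\sum a_{<0>}\theta(c\cdot a_{<-2>}\otimes d\cdot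 a_{<-1>})$ and $\sum c_{(1)}\otimes\theta(c_{(2)}\otimes d)=\sum d_{(2)}\cdot\theta(c\otimes d_{(1)})_{<-1>}\otimes\theta(c\otimes d_{(1)})_{<0>}$. $\theta$ is normalized if $\sum\theta(c_{(1)}\otimes c_{(2)})=\varepsilon(c)1_A$. *)

theory Defs
  imports Complex_Main
begin

text \<open>An element of the tensor
product is represented by a finite list of pairs (its formal sum with coefficient 1 each;
signs/scalars are absorbed into the first factor).
Carrier sets allow submodules (needed for the flatness criterion).\<close>

definition delta :: "'x \<Rightarrow> 'x \<Rightarrow> int" where
  "delta q = (\<lambda>p. if p = q then 1 else 0)"

inductive_set tker2 :: "'a set \<Rightarrow> ('k::comm_ring_1 \<Rightarrow> 'a::ab_group_add \<Rightarrow> 'a)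
    \<Rightarrow> 'b set \<Rightarrow> ('k \<Rightarrow> 'b::ab_group_add \<Rightarrow> 'b) \<Rightarrow> ('a \<times> 'b \<Rightarrow> int) set"
  for SA sa SB sb where
  zero: "(\<lambda>_. 0) \<in> tker2 SA sa SB sb"
| add: "x \<in> tker2 SA sa SB sb \<Longrightarrow> y \<in> tker2 SA sa SB sb \<Longrightarrow> (\<lambda>p. x p + y p) \<in> tker2 SA sa SB sb"
| neg: "x \<in> tker2 SA sa SB sb \<Longrightarrow> (\<lambda>p. - x p) \<in> tker2 SA sa SB sb"
| addl: "a \<in> SA \<Longrightarrow> a' \<in> SA \<Longrightarrow> b \<in> SB \<Longrightarrow>
     (\<lambda>p. delta (a + a', b) p - delta (a, b) p - delta (a', b) p) \<in> tker2 SA sa SB sb"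
| addr: "a \<in> SA \<Longrightarrow> b \<in> SB \<Longrightarrow> b' \<in> SB \<Longrightarrow>
     (\<lambda>p. delta (a, b + b') p - delta (a, b) p - delta (a, b') p) \<in> tker2 SA sa SB sb"
| scal: "a \<in> SA \<Longrightarrow> b \<in> SB \<Longrightarrow>
     (\<lambda>p. delta (sa r a, b) p - delta (a, sb r b) p) \<in> tker2 SA sa SB sb"

definition tensor2_eq :: "'a set \<Rightarrow> ('k::comm_ring_1 \<Rightarrow> 'a::ab_group_add \<Rightarrow> 'a)
    \<Rightarrow> 'b set \<Rightarrow> ('k \<Rightarrow> 'b::ab_group_add \<Rightarrow> 'b) \<Rightarrow> ('a \<times> 'b) list \<Rightarrow> ('a \<times> 'b) list \<Rightarrow> bool" where
  "tensor2_eq SA sa SB sb xs ys \<longleftrightarrow> set xs \<subseteq> SA \<times> SB \<and> set ys \<subseteq> SA \<times> SB \<and>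
     (\<lambda>p. int (count_list xs p) - int (count_list ys p)) \<in> tker2 SA sa SB sb"

abbreviation teq2 where "teq2 sa sb \<equiv> tensor2_eq UNIV sa UNIV sb"

inductive_set tker3 :: "('k::comm_ring_1 \<Rightarrow> 'a::ab_group_add \<Rightarrow> 'a)
    \<Rightarrow> ('k \<Rightarrow> 'b::ab_group_add \<Rightarrow> 'b) \<Rightarrow> ('k \<Rightarrow> 'c::ab_group_add \<Rightarrow> 'c)
    \<Rightarrow> ('a \<times> 'b \<times> 'c \<Rightarrow> int) set"
  for sa sb sc where
  zero: "(\<lambda>_. 0) \<in> tker3 sa sb sc"
| add: "x \<in> tker3 sa sb sc \<Longrightarrow> y \<in> tker3 sa sb sc \<Longrightarrow> (\<lambda>p. x p + y p) \<in> tker3 sa sb sc"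
| neg: "x \<in> tker3 sa sb sc \<Longrightarrow> (\<lambda>p. - x p) \<in> tker3 sa sb sc"
| add1: "(\<lambda>p. delta (a + a', b, c) p - delta (a, b, c) p - delta (a', b, c) p) \<in> tker3 sa sb sc"
| add2: "(\<lambda>p. delta (a, b + b', c) p - delta (a, b, c) p - delta (a, b', c) p) \<in> tker3 sa sb sc"
| add3: "(\<lambda>p. delta (a, b, c + c') p - delta (a, b, c) p - delta (a, b, c') p) \<in> tker3 sa sb sc"
| scal12: "(\<lambda>p. delta (sa r a, b, c) p - delta (a, sb r b, c) p) \<in> tker3 sa sb sc"
| scal23: "(\<lambda>p. delta (a, sb r b, c) p - delta (a, b, sc r c) p) \<in> tker3 sa sb sc"

definition teq3 :: "('k::comm_ring_1 \<Rightarrow> 'a::ab_group_add \<Rightarrow> 'a)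
    \<Rightarrow> ('k \<Rightarrow> 'b::ab_group_add \<Rightarrow> 'b) \<Rightarrow> ('k \<Rightarrow> 'c::ab_group_add \<Rightarrow> 'c)
    \<Rightarrow> ('a \<times> 'b \<times> 'c) list \<Rightarrow> ('a \<times> 'b \<times> 'c) list \<Rightarrow> bool" where
  "teq3 sa sb sc xs ys \<longleftrightarrow> (\<lambda>p. int (count_list xs p) - int (count_list ys p)) \<in> tker3 sa sb sc"

definition k_algebra :: "('k::comm_ring_1 \<Rightarrow> 'r::ring_1 \<Rightarrow> 'r) \<Rightarrow> bool" where
  "k_algebra s \<longleftrightarrow> module s \<and> (\<forall>r x y. s r (x * y) = s r x * y \<and> s r (x * y) = x * s r y)"

definition lin_to_tensor :: "('k::comm_ring_1 \<Rightarrow> 'm::ab_group_add \<Rightarrow> 'm)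
   \<Rightarrow> ('k \<Rightarrow> 'a::ab_group_add \<Rightarrow> 'a) \<Rightarrow> ('k \<Rightarrow> 'b::ab_group_add \<Rightarrow> 'b)
   \<Rightarrow> ('m \<Rightarrow> ('a \<times> 'b) list) \<Rightarrow> bool" where
  "lin_to_tensor sm sa sb D \<longleftrightarrow>
     (\<forall>x y. teq2 sa sb (D (x + y)) (D x @ D y)) \<and>
     (\<forall>r x. teq2 sa sb (D (sm r x)) (map (\<lambda>(u, v). (sa r u, v)) (D x)))"

definition k_linear :: "('k::comm_ring_1 \<Rightarrow> 'm::ab_group_add \<Rightarrow> 'm)
   \<Rightarrow> ('k \<Rightarrow> 'n::ab_group_add \<Rightarrow> 'n) \<Rightarrow> ('m \<Rightarrow> 'n) \<Rightarrow> bool" where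
  "k_linear sm sn f \<longleftrightarrow> (\<forall>x y. f (x + y) = f x + f y) \<and> (\<forall>r x. f (sm r x) = sn r (f x))"

definition k_coalgebra :: "('k::comm_ring_1 \<Rightarrow> 'c::ab_group_add \<Rightarrow> 'c)
   \<Rightarrow> ('c \<Rightarrow> ('c \<times> 'c) list) \<Rightarrow> ('c \<Rightarrow> 'k) \<Rightarrow> bool" where
  "k_coalgebra s D e \<longleftrightarrow> module s \<and> lin_to_tensor s s s D \<and> k_linear s (*) e \<and>
     (\<forall>c. teq3 s s s [(x1, x2, y). (x, y) \<leftarrow> D c, (x1, x2) \<leftarrow> D x]
                     [(x, y1, y2). (x, y) \<leftarrow> D c, (y1, y2) \<leftarrow> D y]) \<and>
     (\<forall>c. sum_list (map (\<lambda>(x, y). s (e x) y) (D c)) = c) \<and>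
     (\<forall>c. sum_list (map (\<lambda>(x, y). s (e y) x) (D c)) = c)"

definition bialgebra :: "('k::comm_ring_1 \<Rightarrow> 'h::ring_1 \<Rightarrow> 'h)
   \<Rightarrow> ('h \<Rightarrow> ('h \<times> 'h) list) \<Rightarrow> ('h \<Rightarrow> 'k) \<Rightarrow> bool" where
  "bialgebra s D e \<longleftrightarrow> k_algebra s \<and> k_coalgebra s D e \<and>
     (\<forall>x y. teq2 s s (D (x * y)) [(x1 * y1, x2 * y2). (x1, x2) \<leftarrow> D x, (y1, y2) \<leftarrow> D y]) \<and>
     teq2 s s (D 1) [(1, 1)] \<and>
     (\<forall>x y. e (x * y) = e x * e y) \<and> e 1 = 1"

text \<open>Left H-comodule algebra A with coaction \<rho>(m) = \<Sum> m_{-1} \<otimes> m_0.\<close>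
definition left_comodule_algebra :: "('k::comm_ring_1 \<Rightarrow> 'h::ring_1 \<Rightarrow> 'h)
   \<Rightarrow> ('h \<Rightarrow> ('h \<times> 'h) list) \<Rightarrow> ('h \<Rightarrow> 'k)
   \<Rightarrow> ('k \<Rightarrow> 'a::ring_1 \<Rightarrow> 'a) \<Rightarrow> ('a \<Rightarrow> ('h \<times> 'a) list) \<Rightarrow> bool" where
  "left_comodule_algebra sH DH eH sA rho \<longleftrightarrow> k_algebra sA \<and> lin_to_tensor sA sH sA rho \<and>
     (\<forall>m. teq3 sH sH sA [(h1, h2, a). (h, a) \<leftarrow> rho m, (h1, h2) \<leftarrow> DH h]
                        [(h, h', a'). (h, a) \<leftarrow> rho m, (h', a') \<leftarrow> rho a]) \<and>
     (\<forall>m. sum_list (map (\<lambda>(h, a). sA (eH h) a) (rho m)) = m) \<and>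
     (\<forall>a b. teq2 sH sA (rho (a * b)) [(h * h', a' * b'). (h, a') \<leftarrow> rho a, (h', b') \<leftarrow> rho b]) \<and>
     teq2 sH sA (rho 1) [(1, 1)]"

definition right_module_coalgebra :: "('k::comm_ring_1 \<Rightarrow> 'h::ring_1 \<Rightarrow> 'h)
   \<Rightarrow> ('h \<Rightarrow> ('h \<times> 'h) list) \<Rightarrow> ('h \<Rightarrow> 'k)
   \<Rightarrow> ('k \<Rightarrow> 'c::ab_group_add \<Rightarrow> 'c) \<Rightarrow> ('c \<Rightarrow> ('c \<times> 'c) list) \<Rightarrow> ('c \<Rightarrow> 'k)
   \<Rightarrow> ('c \<Rightarrow> 'h \<Rightarrow> 'c) \<Rightarrow> bool" where
  "right_module_coalgebra sH DH eH sC DC eC act \<longleftrightarrow> k_coalgebra sC DC eC \<and>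
     (\<forall>c c' h. act (c + c') h = act c h + act c' h) \<and>
     (\<forall>c h h'. act c (h + h') = act c h + act c h') \<and>
     (\<forall>r c h. act (sC r c) h = sC r (act c h) \<and> act c (sH r h) = sC r (act c h)) \<and>
     (\<forall>c g h. act c (g * h) = act (act c g) h) \<and> (\<forall>c. act c 1 = c) \<and>
     (\<forall>c h. teq2 sC sC (DC (act c h)) [(act x h1, act y h2). (x, y) \<leftarrow> DC c, (h1, h2) \<leftarrow> DH h]) \<and>
     (\<forall>c h. eC (act c h) = eC c * eH h)"

definition is_ideal :: "'k::comm_ring_1 set \<Rightarrow> bool" where
  "is_ideal I \<longleftrightarrow> 0 \<in> I \<and> (\<forall>x\<in>I. \<forall>y\<in>I. x + y \<in> I) \<and> (\<forall>r. \<forall>x\<in>I. r * x \<in> I)"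

text \<open>Flatness of C over k, via the ideal criterion: for every ideal I of k the
multiplication map I \<otimes>_k C \<rightarrow> C is injective.\<close>
definition k_flat :: "('k::comm_ring_1 \<Rightarrow> 'c::ab_group_add \<Rightarrow> 'c) \<Rightarrow> bool" where
  "k_flat sC \<longleftrightarrow> (\<forall>I xs. is_ideal I \<longrightarrow> set xs \<subseteq> I \<times> UNIV \<longrightarrow>
       sum_list (map (\<lambda>(i, c). sC i c) xs) = 0 \<longrightarrow> tensor2_eq I (*) UNIV sC xs [])"

definition doi_hopf_datum where
  "doi_hopf_datum sH DH eH sA rho sC DC eC act \<longleftrightarrow>
     bialgebra sH DH eH \<and> left_comodule_algebra sH DH eH sA rho \<and>
     right_module_coalgebra sH DH eH sC DC eC act \<and> k_flat sC"

text \<open>Elements of #(D,A) = Hom(C^cop \<otimes> C, A) are represented by k-bilinear maps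
C \<times> C \<rightarrow> A (universal property of the tensor product): f c d = f(c \<otimes> d).\<close>
definition k_bilinear :: "('k::comm_ring_1 \<Rightarrow> 'c::ab_group_add \<Rightarrow> 'c)
   \<Rightarrow> ('k \<Rightarrow> 'a::ab_group_add \<Rightarrow> 'a) \<Rightarrow> ('c \<Rightarrow> 'c \<Rightarrow> 'a) \<Rightarrow> bool" where
  "k_bilinear sC sA f \<longleftrightarrow> (\<forall>d. k_linear sC sA (\<lambda>c. f c d)) \<and> (\<forall>c. k_linear sC sA (f c))"

text \<open>In C^cop \<otimes> C: \<Delta>(c \<otimes> d) = \<Sum>(c_2 \<otimes> d_1) \<otimes> (c_1 \<otimes> d_2), and (c \<otimes> d) \<cdot> h = c \<otimes> d \<cdot> h, so
(f \<bullet> g)(c \<otimes> d) = \<Sum> f(c_2 \<otimes> d_1)_0 g(c_1 \<otimes> d_2 \<cdot> f(c_2 \<otimes> d_1)_{-1}).\<close>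
definition kop_prod :: "('c \<Rightarrow> ('c \<times> 'c) list) \<Rightarrow> ('c \<Rightarrow> 'h \<Rightarrow> 'c) \<Rightarrow> ('a::ring_1 \<Rightarrow> ('h \<times> 'a) list)
   \<Rightarrow> ('c \<Rightarrow> 'c \<Rightarrow> 'a) \<Rightarrow> ('c \<Rightarrow> 'c \<Rightarrow> 'a) \<Rightarrow> ('c \<Rightarrow> 'c \<Rightarrow> 'a)" where
  "kop_prod DC act rho f g = (\<lambda>c d. sum_list
     [a0 * g c1 (act d2 hm1). (c1, c2) \<leftarrow> DC c, (d1, d2) \<leftarrow> DC d, (hm1, a0) \<leftarrow> rho (f c2 d1)])"

definition V3 :: "('k::comm_ring_1 \<Rightarrow> 'h::ring_1 \<Rightarrow> 'h)
   \<Rightarrow> ('k \<Rightarrow> 'a::ring_1 \<Rightarrow> 'a) \<Rightarrow> ('a \<Rightarrow> ('h \<times> 'a) list)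
   \<Rightarrow> ('k \<Rightarrow> 'c::ab_group_add \<Rightarrow> 'c) \<Rightarrow> ('c \<Rightarrow> ('c \<times> 'c) list) \<Rightarrow> ('c \<Rightarrow> 'h \<Rightarrow> 'c)
   \<Rightarrow> ('c \<Rightarrow> 'c \<Rightarrow> 'a) set" where
  "V3 sH sA rho sC DC act = {\<theta>. k_bilinear sC sA \<theta> \<and>
     (\<forall>a c d. \<theta> c d * a =
        sum_list [a00 * \<theta> (act c hm2) (act d hm1). (hm2, a0) \<leftarrow> rho a, (hm1, a00) \<leftarrow> rho a0]) \<and>
     (\<forall>c d. teq2 sC sA [(c1, \<theta> c2 d). (c1, c2) \<leftarrow> DC c]
                       [(act d2 hm1, a0). (d1, d2) \<leftarrow> DC d, (hm1, a0) \<leftarrow> rho (\<theta> c d1)])}"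

definition normalized :: "('k::comm_ring_1 \<Rightarrow> 'a::ring_1 \<Rightarrow> 'a) \<Rightarrow> ('c \<Rightarrow> ('c \<times> 'c) list)
   \<Rightarrow> ('c \<Rightarrow> 'k) \<Rightarrow> ('c \<Rightarrow> 'c \<Rightarrow> 'a) \<Rightarrow> bool" where
  "normalized sA DC eC \<theta> \<longleftrightarrow> (\<forall>c. sum_list (map (\<lambda>(x, y). \<theta> x y) (DC c)) = sA (eC c) 1)"

end

theory Submission
  imports Defs "HOL-Library.Function_Algebras"
begin


definition subgrp :: "'m::ab_group_add set \<Rightarrow> bool" where
  "subgrp K \<longleftrightarrow> 0 \<in> K \<and> (\<forall>x\<in>K. \<forall>y\<in>K. x + y \<in> K) \<and> (\<forall>x\<in>K. -x \<in> K)"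

definition mc :: "'m::ab_group_add set \<Rightarrow> 'm \<Rightarrow> 'm \<Rightarrow> bool" where
  "mc K x y \<longleftrightarrow> x - y \<in> K"

lemma subgrpD: assumes "subgrp K"
  shows "0 \<in> K" "x \<in> K \<Longrightarrow> y \<in> K \<Longrightarrow> x + y \<in> K" "x \<in> K \<Longrightarrow> -x \<in> K"
    "x \<in> K \<Longrightarrow> y \<in> K \<Longrightarrow> x - y \<in> K"
  using assms unfolding subgrp_def diff_conv_add_uminus by blast+

lemma subgrp_zero: "subgrp {0}" by (simp add: subgrp_def)

lemma mc_zero[simp]: "mc {0} x y \<longleftrightarrow> x = y" by (simp add: mc_def)

lemma mc_refl: "subgrp K \<Longrightarrow> mc K x x" by (simp add: mc_def subgrpD)
lemma mc_eq: "subgrp K \<Longrightarrow> x = y \<Longrightarrow> mc K x y" by (simp add: mc_refl)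
lemma mc_sym: "subgrp K \<Longrightarrow> mc K x y \<Longrightarrow> mc K y x"
  unfolding mc_def using subgrpD(3)[of K "x - y"] by simp
lemma mc_trans: "subgrp K \<Longrightarrow> mc K x y \<Longrightarrow> mc K y z \<Longrightarrow> mc K x z"
  unfolding mc_def using subgrpD(2)[of K "x - y" "y - z"] by simp
lemma mc_add: "subgrp K \<Longrightarrow> mc K x y \<Longrightarrow> mc K x' y' \<Longrightarrow> mc K (x + x') (y + y')"
  unfolding mc_def using subgrpD(2)[of K "x - y" "x' - y'"] by (simp add: algebra_simps)
lemma mc_uminus: "subgrp K \<Longrightarrow> mc K x y \<Longrightarrow> mc K (-x) (-y)"
  unfolding mc_def using subgrpD(3)[of K "x - y"] by (simp add: algebra_simps)
lemma mc_diff: "subgrp K \<Longrightarrow> mc K x y \<Longrightarrow> mc K x' y' \<Longrightarrow> mc K (x - x') (y - y')"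
  using mc_add[of K x y "-x'" "-y'"] mc_uminus[of K x' y'] by simp

lemma mc_sum_list: assumes "subgrp K" "\<And>x. x \<in> set xs \<Longrightarrow> mc K (f x) (g x)"
  shows "mc K (sum_list (map f xs)) (sum_list (map g xs))"
  using assms(2) by (induction xs) (auto intro: mc_add mc_refl assms(1))

lemma sum_count_list:
  fixes g :: "'p \<Rightarrow> 'm::ring_1"
  assumes "finite S" "set xs \<subseteq> S"
  shows "(\<Sum>p\<in>S. of_int (int (count_list xs p)) * g p) = sum_list (map g xs)"
  using assms(2)
proof (induction xs)
  case Nil then show ?case by simp
next
  case (Cons x xs)
  have "(\<Sum>p\<in>S. of_int (int (count_list (x#xs) p)) * g p)
      = (\<Sum>p\<in>S. of_int (int (count_list xs p)) * g p + (if p = x then g p else 0))"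
    by (intro sum.cong) (auto simp: algebra_simps)
  also have "\<dots> = sum_list (map g xs) + g x"
    using Cons assms(1) by (simp add: sum.distrib)
  finally show ?case by (simp add: add.commute)
qed

lemma sum_delta_int:
  fixes g :: "'p \<Rightarrow> 'm::ring_1"
  assumes "finite S" "q \<in> S"
  shows "(\<Sum>p\<in>S. of_int (delta q p) * g p) = g q"
proof -
  have "(\<Sum>p\<in>S. of_int (delta q p) * g p) = (\<Sum>p\<in>S. if p = q then g p else 0)"
    by (intro sum.cong) (auto simp: delta_def)
  then show ?thesis using assms by simp
qed

lemma tker2_phi:
  fixes g :: "'a::ab_group_add \<times> 'b::ab_group_add \<Rightarrow> 'm::ring_1"
  assumes "z \<in> tker2 SA sa SB sb" "subgrp K"
    and gl: "\<And>a a' b. a \<in> SA \<Longrightarrow> a' \<in> SA \<Longrightarrow> b \<in> SB \<Longrightarrow> g (a + a', b) - g (a, b) - g (a', b) \<in> K"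
    and gr: "\<And>a b b'. a \<in> SA \<Longrightarrow> b \<in> SB \<Longrightarrow> b' \<in> SB \<Longrightarrow> g (a, b + b') - g (a, b) - g (a, b') \<in> K"
    and gs: "\<And>a b r. a \<in> SA \<Longrightarrow> b \<in> SB \<Longrightarrow> g (sa r a, b) - g (a, sb r b) \<in> K"
  shows "\<exists>F. finite F \<and> (\<forall>p. p \<notin> F \<longrightarrow> z p = 0) \<and>
           (\<forall>S. finite S \<longrightarrow> F \<subseteq> S \<longrightarrow> (\<Sum>p\<in>S. of_int (z p) * g p) \<in> K)"
  using assms(1)
proof (induction rule: tker2.induct)
  case zero
  then show ?case using subgrpD(1)[OF assms(2)] by (intro exI[of _ "{}"]) auto
next
  case (add x y)
  then obtain F1 F2 where F: "finite F1" "\<forall>p. p \<notin> F1 \<longrightarrow> x p = 0"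
      "\<forall>S. finite S \<longrightarrow> F1 \<subseteq> S \<longrightarrow> (\<Sum>p\<in>S. of_int (x p) * g p) \<in> K"
      "finite F2" "\<forall>p. p \<notin> F2 \<longrightarrow> y p = 0"
      "\<forall>S. finite S \<longrightarrow> F2 \<subseteq> S \<longrightarrow> (\<Sum>p\<in>S. of_int (y p) * g p) \<in> K" by blast
  show ?case
  proof (intro exI[of _ "F1 \<union> F2"] conjI allI impI)
    fix S :: "('a \<times> 'b) set" assume S: "finite S" "F1 \<union> F2 \<subseteq> S"
    have "(\<Sum>p\<in>S. of_int (x p + y p) * g p) = (\<Sum>p\<in>S. of_int (x p) * g p) + (\<Sum>p\<in>S. of_int (y p) * g p)"
      by (simp add: distrib_right sum.distrib)
    then show "(\<Sum>p\<in>S. of_int (x p + y p) * g p) \<in> K"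
      using F S subgrpD(2)[OF assms(2)] by auto
  qed (use F in auto)
next
  case (neg x)
  then obtain F1 where F: "finite F1" "\<forall>p. p \<notin> F1 \<longrightarrow> x p = 0"
      "\<forall>S. finite S \<longrightarrow> F1 \<subseteq> S \<longrightarrow> (\<Sum>p\<in>S. of_int (x p) * g p) \<in> K" by blast
  show ?case
  proof (intro exI[of _ F1] conjI allI impI)
    fix S :: "('a \<times> 'b) set" assume S: "finite S" "F1 \<subseteq> S"
    have "(\<Sum>p\<in>S. of_int (- x p) * g p) = - (\<Sum>p\<in>S. of_int (x p) * g p)"
      by (simp add: sum_negf)
    then show "(\<Sum>p\<in>S. of_int (- x p) * g p) \<in> K"
      using F S subgrpD(3)[OF assms(2)] by auto
  qed (use F in auto)
next
  case (addl a a' b)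
  show ?case
  proof (intro exI[of _ "{(a + a', b), (a, b), (a', b)}"] conjI allI impI)
    fix S :: "('a \<times> 'b) set" assume S: "finite S" "{(a + a', b), (a, b), (a', b)} \<subseteq> S"
    have "(\<Sum>p\<in>S. of_int (delta (a + a', b) p - delta (a, b) p - delta (a', b) p) * g p)
        = (\<Sum>p\<in>S. of_int (delta (a + a', b) p) * g p) - (\<Sum>p\<in>S. of_int (delta (a, b) p) * g p)
          - (\<Sum>p\<in>S. of_int (delta (a', b) p) * g p)"
      by (simp add: left_diff_distrib sum_subtractf)
    also have "\<dots> = g (a + a', b) - g (a, b) - g (a', b)" using S by (simp add: sum_delta_int)
    finally show "(\<Sum>p\<in>S. of_int (delta (a + a', b) p - delta (a, b) p - delta (a', b) p) * g p) \<in> K"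
      using gl addl by simp
  qed (auto simp: delta_def)
next
  case (addr a b b')
  show ?case
  proof (intro exI[of _ "{(a, b + b'), (a, b), (a, b')}"] conjI allI impI)
    fix S :: "('a \<times> 'b) set" assume S: "finite S" "{(a, b + b'), (a, b), (a, b')} \<subseteq> S"
    have "(\<Sum>p\<in>S. of_int (delta (a, b + b') p - delta (a, b) p - delta (a, b') p) * g p)
        = (\<Sum>p\<in>S. of_int (delta (a, b + b') p) * g p) - (\<Sum>p\<in>S. of_int (delta (a, b) p) * g p)
          - (\<Sum>p\<in>S. of_int (delta (a, b') p) * g p)"
      by (simp add: left_diff_distrib sum_subtractf)
    also have "\<dots> = g (a, b + b') - g (a, b) - g (a, b')" using S by (simp add: sum_delta_int)
    finally show "(\<Sum>p\<in>S. of_int (delta (a, b + b') p - delta (a, b) p - delta (a, b') p) * g p) \<in> K"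
      using gr addr by simp
  qed (auto simp: delta_def)
next
  case (scal a b r)
  show ?case
  proof (intro exI[of _ "{(sa r a, b), (a, sb r b)}"] conjI allI impI)
    fix S :: "('a \<times> 'b) set" assume S: "finite S" "{(sa r a, b), (a, sb r b)} \<subseteq> S"
    have "(\<Sum>p\<in>S. of_int (delta (sa r a, b) p - delta (a, sb r b) p) * g p)
        = (\<Sum>p\<in>S. of_int (delta (sa r a, b) p) * g p) - (\<Sum>p\<in>S. of_int (delta (a, sb r b) p) * g p)"
      by (simp add: left_diff_distrib sum_subtractf)
    also have "\<dots> = g (sa r a, b) - g (a, sb r b)" using S by (simp add: sum_delta_int)
    finally show "(\<Sum>p\<in>S. of_int (delta (sa r a, b) p - delta (a, sb r b) p) * g p) \<in> K"
      using gs scal by simp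
  qed (auto simp: delta_def)
qed

lemma tensor2_transport:
  fixes g :: "'a::ab_group_add \<times> 'b::ab_group_add \<Rightarrow> 'm::ring_1"
  assumes "tensor2_eq SA sa SB sb xs ys" "subgrp K"
    and gl: "\<And>a a' b. a \<in> SA \<Longrightarrow> a' \<in> SA \<Longrightarrow> b \<in> SB \<Longrightarrow> g (a + a', b) - g (a, b) - g (a', b) \<in> K"
    and gr: "\<And>a b b'. a \<in> SA \<Longrightarrow> b \<in> SB \<Longrightarrow> b' \<in> SB \<Longrightarrow> g (a, b + b') - g (a, b) - g (a, b') \<in> K"
    and gs: "\<And>a b r. a \<in> SA \<Longrightarrow> b \<in> SB \<Longrightarrow> g (sa r a, b) - g (a, sb r b) \<in> K"
  shows "mc K (sum_list (map g xs)) (sum_list (map g ys))"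
proof -
  let ?z = "\<lambda>p. int (count_list xs p) - int (count_list ys p)"
  have z: "?z \<in> tker2 SA sa SB sb" using assms(1) by (simp add: tensor2_eq_def)
  obtain F where F: "finite F" "\<forall>S. finite S \<longrightarrow> F \<subseteq> S \<longrightarrow> (\<Sum>p\<in>S. of_int (?z p) * g p) \<in> K"
    using tker2_phi[where g=g, OF z assms(2) gl gr gs] by blast
  let ?S = "F \<union> set xs \<union> set ys"
  have "(\<Sum>p\<in>?S. of_int (?z p) * g p) \<in> K" by (rule F(2)[rule_format]) (use F(1) in auto)
  moreover have "(\<Sum>p\<in>?S. of_int (?z p) * g p) =
     (\<Sum>p\<in>?S. of_int (int (count_list xs p)) * g p) - (\<Sum>p\<in>?S. of_int (int (count_list ys p)) * g p)"
    by (simp add: left_diff_distrib sum_subtractf del: of_int_of_nat_eq)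
  moreover have "(\<Sum>p\<in>?S. of_int (int (count_list xs p)) * g p) = sum_list (map g xs)"
    by (rule sum_count_list) (use F(1) in auto)
  moreover have "(\<Sum>p\<in>?S. of_int (int (count_list ys p)) * g p) = sum_list (map g ys)"
    by (rule sum_count_list) (use F(1) in auto)
  ultimately show ?thesis by (simp add: mc_def del: of_int_of_nat_eq)
qed


lemma tker3_phi:
  fixes g :: "'a::ab_group_add \<times> 'b::ab_group_add \<times> 'c::ab_group_add \<Rightarrow> 'm::ring_1"
  assumes "z \<in> tker3 sa sb sc" "subgrp K"
    and g1: "\<And>a a' b c. g (a + a', b, c) - g (a, b, c) - g (a', b, c) \<in> K"
    and g2: "\<And>a b b' c. g (a, b + b', c) - g (a, b, c) - g (a, b', c) \<in> K"
    and g3: "\<And>a b c c'. g (a, b, c + c') - g (a, b, c) - g (a, b, c') \<in> K"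
    and s12: "\<And>a b c r. g (sa r a, b, c) - g (a, sb r b, c) \<in> K"
    and s23: "\<And>a b c r. g (a, sb r b, c) - g (a, b, sc r c) \<in> K"
  shows "\<exists>F. finite F \<and> (\<forall>p. p \<notin> F \<longrightarrow> z p = 0) \<and>
           (\<forall>S. finite S \<longrightarrow> F \<subseteq> S \<longrightarrow> (\<Sum>p\<in>S. of_int (z p) * g p) \<in> K)"
  using assms(1)
proof (induction rule: tker3.induct)
  case zero
  then show ?case using subgrpD(1)[OF assms(2)] by (intro exI[of _ "{}"]) auto
next
  case (add x y)
  then obtain F1 F2 where F: "finite F1" "\<forall>p. p \<notin> F1 \<longrightarrow> x p = 0"
      "\<forall>S. finite S \<longrightarrow> F1 \<subseteq> S \<longrightarrow> (\<Sum>p\<in>S. of_int (x p) * g p) \<in> K"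
      "finite F2" "\<forall>p. p \<notin> F2 \<longrightarrow> y p = 0"
      "\<forall>S. finite S \<longrightarrow> F2 \<subseteq> S \<longrightarrow> (\<Sum>p\<in>S. of_int (y p) * g p) \<in> K" by blast
  show ?case
  proof (intro exI[of _ "F1 \<union> F2"] conjI allI impI)
    fix S :: "('a \<times> 'b \<times> 'c) set" assume S: "finite S" "F1 \<union> F2 \<subseteq> S"
    have "(\<Sum>p\<in>S. of_int (x p + y p) * g p) = (\<Sum>p\<in>S. of_int (x p) * g p) + (\<Sum>p\<in>S. of_int (y p) * g p)"
      by (simp add: distrib_right sum.distrib)
    then show "(\<Sum>p\<in>S. of_int (x p + y p) * g p) \<in> K"
      using F S subgrpD(2)[OF assms(2)] by auto
  qed (use F in auto)
next
  case (neg x)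
  then obtain F1 where F: "finite F1" "\<forall>p. p \<notin> F1 \<longrightarrow> x p = 0"
      "\<forall>S. finite S \<longrightarrow> F1 \<subseteq> S \<longrightarrow> (\<Sum>p\<in>S. of_int (x p) * g p) \<in> K" by blast
  show ?case
  proof (intro exI[of _ F1] conjI allI impI)
    fix S :: "('a \<times> 'b \<times> 'c) set" assume S: "finite S" "F1 \<subseteq> S"
    have "(\<Sum>p\<in>S. of_int (- x p) * g p) = - (\<Sum>p\<in>S. of_int (x p) * g p)"
      by (simp add: sum_negf)
    then show "(\<Sum>p\<in>S. of_int (- x p) * g p) \<in> K"
      using F S subgrpD(3)[OF assms(2)] by auto
  qed (use F in auto)
next
  case (add1 a a' b c)
  show ?case
  proof (intro exI[of _ "{(a + a', b, c), (a, b, c), (a', b, c)}"] conjI allI impI)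
    fix S :: "('a \<times> 'b \<times> 'c) set" assume S: "finite S" "{(a + a', b, c), (a, b, c), (a', b, c)} \<subseteq> S"
    have "(\<Sum>p\<in>S. of_int (delta (a + a', b, c) p - delta (a, b, c) p - delta (a', b, c) p) * g p)
        = (\<Sum>p\<in>S. of_int (delta (a + a', b, c) p) * g p) - (\<Sum>p\<in>S. of_int (delta (a, b, c) p) * g p)
          - (\<Sum>p\<in>S. of_int (delta (a', b, c) p) * g p)"
      by (simp add: left_diff_distrib sum_subtractf)
    also have "\<dots> = g (a + a', b, c) - g (a, b, c) - g (a', b, c)" using S by (simp add: sum_delta_int)
    finally show "(\<Sum>p\<in>S. of_int (delta (a + a', b, c) p - delta (a, b, c) p - delta (a', b, c) p) * g p) \<in> K"
      using g1 by simp
  qed (auto simp: delta_def)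
next
  case (add2 a b b' c)
  show ?case
  proof (intro exI[of _ "{(a, b + b', c), (a, b, c), (a, b', c)}"] conjI allI impI)
    fix S :: "('a \<times> 'b \<times> 'c) set" assume S: "finite S" "{(a, b + b', c), (a, b, c), (a, b', c)} \<subseteq> S"
    have "(\<Sum>p\<in>S. of_int (delta (a, b + b', c) p - delta (a, b, c) p - delta (a, b', c) p) * g p)
        = (\<Sum>p\<in>S. of_int (delta (a, b + b', c) p) * g p) - (\<Sum>p\<in>S. of_int (delta (a, b, c) p) * g p)
          - (\<Sum>p\<in>S. of_int (delta (a, b', c) p) * g p)"
      by (simp add: left_diff_distrib sum_subtractf)
    also have "\<dots> = g (a, b + b', c) - g (a, b, c) - g (a, b', c)" using S by (simp add: sum_delta_int)
    finally show "(\<Sum>p\<in>S. of_int (delta (a, b + b', c) p - delta (a, b, c) p - delta (a, b', c) p) * g p) \<in> K"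
      using g2 by simp
  qed (auto simp: delta_def)
next
  case (add3 a b c c')
  show ?case
  proof (intro exI[of _ "{(a, b, c + c'), (a, b, c), (a, b, c')}"] conjI allI impI)
    fix S :: "('a \<times> 'b \<times> 'c) set" assume S: "finite S" "{(a, b, c + c'), (a, b, c), (a, b, c')} \<subseteq> S"
    have "(\<Sum>p\<in>S. of_int (delta (a, b, c + c') p - delta (a, b, c) p - delta (a, b, c') p) * g p)
        = (\<Sum>p\<in>S. of_int (delta (a, b, c + c') p) * g p) - (\<Sum>p\<in>S. of_int (delta (a, b, c) p) * g p)
          - (\<Sum>p\<in>S. of_int (delta (a, b, c') p) * g p)"
      by (simp add: left_diff_distrib sum_subtractf)
    also have "\<dots> = g (a, b, c + c') - g (a, b, c) - g (a, b, c')" using S by (simp add: sum_delta_int)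
    finally show "(\<Sum>p\<in>S. of_int (delta (a, b, c + c') p - delta (a, b, c) p - delta (a, b, c') p) * g p) \<in> K"
      using g3 by simp
  qed (auto simp: delta_def)
next
  case (scal12 r a b c)
  show ?case
  proof (intro exI[of _ "{(sa r a, b, c), (a, sb r b, c)}"] conjI allI impI)
    fix S :: "('a \<times> 'b \<times> 'c) set" assume S: "finite S" "{(sa r a, b, c), (a, sb r b, c)} \<subseteq> S"
    have "(\<Sum>p\<in>S. of_int (delta (sa r a, b, c) p - delta (a, sb r b, c) p) * g p)
        = (\<Sum>p\<in>S. of_int (delta (sa r a, b, c) p) * g p) - (\<Sum>p\<in>S. of_int (delta (a, sb r b, c) p) * g p)"
      by (simp add: left_diff_distrib sum_subtractf)
    also have "\<dots> = g (sa r a, b, c) - g (a, sb r b, c)" using S by (simp add: sum_delta_int)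
    finally show "(\<Sum>p\<in>S. of_int (delta (sa r a, b, c) p - delta (a, sb r b, c) p) * g p) \<in> K"
      using s12 by simp
  qed (auto simp: delta_def)
next
  case (scal23 a r b c)
  show ?case
  proof (intro exI[of _ "{(a, sb r b, c), (a, b, sc r c)}"] conjI allI impI)
    fix S :: "('a \<times> 'b \<times> 'c) set" assume S: "finite S" "{(a, sb r b, c), (a, b, sc r c)} \<subseteq> S"
    have "(\<Sum>p\<in>S. of_int (delta (a, sb r b, c) p - delta (a, b, sc r c) p) * g p)
        = (\<Sum>p\<in>S. of_int (delta (a, sb r b, c) p) * g p) - (\<Sum>p\<in>S. of_int (delta (a, b, sc r c) p) * g p)"
      by (simp add: left_diff_distrib sum_subtractf)
    also have "\<dots> = g (a, sb r b, c) - g (a, b, sc r c)" using S by (simp add: sum_delta_int)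
    finally show "(\<Sum>p\<in>S. of_int (delta (a, sb r b, c) p - delta (a, b, sc r c) p) * g p) \<in> K"
      using s23 by simp
  qed (auto simp: delta_def)
qed

lemma tensor3_transport:
  fixes g :: "'a::ab_group_add \<times> 'b::ab_group_add \<times> 'c::ab_group_add \<Rightarrow> 'm::ring_1"
  assumes "teq3 sa sb sc xs ys" "subgrp K"
    and g1: "\<And>a a' b c. g (a + a', b, c) - g (a, b, c) - g (a', b, c) \<in> K"
    and g2: "\<And>a b b' c. g (a, b + b', c) - g (a, b, c) - g (a, b', c) \<in> K"
    and g3: "\<And>a b c c'. g (a, b, c + c') - g (a, b, c) - g (a, b, c') \<in> K"
    and s12: "\<And>a b c r. g (sa r a, b, c) - g (a, sb r b, c) \<in> K"
    and s23: "\<And>a b c r. g (a, sb r b, c) - g (a, b, sc r c) \<in> K"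
  shows "mc K (sum_list (map g xs)) (sum_list (map g ys))"
proof -
  let ?z = "\<lambda>p. int (count_list xs p) - int (count_list ys p)"
  have z: "?z \<in> tker3 sa sb sc" using assms(1) by (simp add: teq3_def)
  obtain F where F: "finite F" "\<forall>S. finite S \<longrightarrow> F \<subseteq> S \<longrightarrow> (\<Sum>p\<in>S. of_int (?z p) * g p) \<in> K"
    using tker3_phi[where g=g, OF z assms(2) g1 g2 g3 s12 s23] by blast
  let ?S = "F \<union> set xs \<union> set ys"
  have "(\<Sum>p\<in>?S. of_int (?z p) * g p) \<in> K" by (rule F(2)[rule_format]) (use F(1) in auto)
  moreover have "(\<Sum>p\<in>?S. of_int (?z p) * g p) =
     (\<Sum>p\<in>?S. of_int (int (count_list xs p)) * g p) - (\<Sum>p\<in>?S. of_int (int (count_list ys p)) * g p)"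
    by (simp add: left_diff_distrib sum_subtractf del: of_int_of_nat_eq)
  moreover have "(\<Sum>p\<in>?S. of_int (int (count_list xs p)) * g p) = sum_list (map g xs)"
    by (rule sum_count_list) (use F(1) in auto)
  moreover have "(\<Sum>p\<in>?S. of_int (int (count_list ys p)) * g p) = sum_list (map g ys)"
    by (rule sum_count_list) (use F(1) in auto)
  ultimately show ?thesis by (simp add: mc_def del: of_int_of_nat_eq)
qed

section \<open>Tensors as integer-valued functions\<close>

definition tv :: "'p list \<Rightarrow> 'p \<Rightarrow> int" where
  "tv xs = (\<lambda>p. int (count_list xs p))"

lemma tv_Nil[simp]: "tv [] = 0" by (simp add: tv_def fun_eq_iff)
lemma tv_append[simp]: "tv (xs @ ys) = tv xs + tv ys" by (simp add: tv_def fun_eq_iff)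
lemma tv_Cons: "tv (x # xs) = delta x + tv xs"
  by (simp add: tv_def fun_eq_iff delta_def)
lemma tv_concat: "tv (concat xss) = sum_list (map tv xss)"
  by (induction xss) auto
lemma tv_concat_map: "tv (concat (map f xs)) = sum_list (map (\<lambda>x. tv (f x)) xs)"
  by (simp add: tv_concat o_def)

abbreviation KT2 where "KT2 sa sb \<equiv> tker2 UNIV sa UNIV sb"

lemma subgrp_KT2: "subgrp (tker2 SA sa SB sb)"
  unfolding subgrp_def
proof (intro conjI ballI)
  show "0 \<in> tker2 SA sa SB sb" unfolding zero_fun_def by (rule tker2.zero)
next
  fix x y assume "x \<in> tker2 SA sa SB sb" "y \<in> tker2 SA sa SB sb"
  then show "x + y \<in> tker2 SA sa SB sb" unfolding plus_fun_def by (rule tker2.add)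
next
  fix x assume "x \<in> tker2 SA sa SB sb"
  then show "- x \<in> tker2 SA sa SB sb" unfolding fun_Compl_def by (rule tker2.neg)
qed

lemma subgrp_KT3: "subgrp (tker3 sa sb sc)"
  unfolding subgrp_def
proof (intro conjI ballI)
  show "0 \<in> tker3 sa sb sc" unfolding zero_fun_def by (rule tker3.zero)
next
  fix x y assume "x \<in> tker3 sa sb sc" "y \<in> tker3 sa sb sc"
  then show "x + y \<in> tker3 sa sb sc" unfolding plus_fun_def by (rule tker3.add)
next
  fix x assume "x \<in> tker3 sa sb sc"
  then show "- x \<in> tker3 sa sb sc" unfolding fun_Compl_def by (rule tker3.neg)
qed

lemma teq2_iff: "teq2 sa sb xs ys \<longleftrightarrow> mc (KT2 sa sb) (tv xs) (tv ys)"
proof -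
  have "tv xs - tv ys = (\<lambda>p. int (count_list xs p) - int (count_list ys p))"
    by (simp add: tv_def fun_eq_iff)
  then show ?thesis by (simp add: tensor2_eq_def mc_def)
qed

lemma teq3_iff: "teq3 sa sb sc xs ys \<longleftrightarrow> mc (tker3 sa sb sc) (tv xs) (tv ys)"
proof -
  have "tv xs - tv ys = (\<lambda>p. int (count_list xs p) - int (count_list ys p))"
    by (simp add: tv_def fun_eq_iff)
  then show ?thesis by (simp add: teq3_def mc_def)
qed

lemma teq2_refl: "teq2 sa sb xs xs" by (simp add: teq2_iff mc_refl subgrp_KT2)
lemma teq2_eqI: "xs = ys \<Longrightarrow> teq2 sa sb xs ys" by (simp add: teq2_refl)
lemma teq2_tvI: "tv xs = tv ys \<Longrightarrow> teq2 sa sb xs ys" by (simp add: teq2_iff mc_refl subgrp_KT2)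
lemma teq2_sym: "teq2 sa sb xs ys \<Longrightarrow> teq2 sa sb ys xs" by (simp add: teq2_iff mc_sym subgrp_KT2)
lemma teq2_trans: "teq2 sa sb xs ys \<Longrightarrow> teq2 sa sb ys zs \<Longrightarrow> teq2 sa sb xs zs"
  unfolding teq2_iff by (rule mc_trans[OF subgrp_KT2])
lemma teq2_append: "teq2 sa sb xs ys \<Longrightarrow> teq2 sa sb xs' ys' \<Longrightarrow> teq2 sa sb (xs @ xs') (ys @ ys')"
  unfolding teq2_iff by (simp add: mc_add subgrp_KT2)
lemma teq2_cancel: "teq2 sa sb (xs @ zs) (ys @ zs) \<Longrightarrow> teq2 sa sb xs ys"
  unfolding teq2_iff by (simp add: mc_def)
lemma teq2_concat: "(\<And>x. x \<in> set L \<Longrightarrow> teq2 sa sb (f x) (g x)) \<Longrightarrow>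
    teq2 sa sb (concat (map f L)) (concat (map g L))"
  unfolding teq2_iff tv_concat_map by (rule mc_sum_list[OF subgrp_KT2])

lemma tv_single: "tv [x] = delta x" by (simp add: tv_Cons)

lemma teq2_addl: "teq2 sa sb [(a + a', b)] [(a, b), (a', b)]"
proof -
  have "tv [(a + a', b)] - tv [(a, b), (a', b)] = (\<lambda>p. delta (a + a', b) p - delta (a, b) p - delta (a', b) p)"
    by (simp add: tv_Cons fun_eq_iff)
  then show ?thesis unfolding teq2_iff mc_def by (simp add: tker2.addl)
qed
lemma teq2_addr: "teq2 sa sb [(a, b + b')] [(a, b), (a, b')]"
proof -
  have "tv [(a, b + b')] - tv [(a, b), (a, b')] = (\<lambda>p. delta (a, b + b') p - delta (a, b) p - delta (a, b') p)"
    by (simp add: tv_Cons fun_eq_iff)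
  then show ?thesis unfolding teq2_iff mc_def by (simp add: tker2.addr)
qed
lemma teq2_scal: "teq2 sa sb [(sa r a, b)] [(a, sb r b)]"
proof -
  have "tv [(sa r a, b)] - tv [(a, sb r b)] = (\<lambda>p. delta (sa r a, b) p - delta (a, sb r b) p)"
    by (simp add: tv_Cons fun_eq_iff)
  then show ?thesis unfolding teq2_iff mc_def by (simp add: tker2.scal)
qed

lemma teq2_zero_r: "teq2 sa sb [] [(a, 0)]"
  using teq2_addr[of sa sb a 0 0] by (intro teq2_cancel[of _ _ _ _ "[(a, 0)]"]) (auto intro: teq2_sym)

lemmas [trans] = teq2_trans

lemma teq2_pair_sum: "teq2 sa sb [(u, sum_list xs)] (map (\<lambda>a. (u, a)) xs)"
proof (induction xs)
  case Nil then show ?case using teq2_zero_r teq2_sym by fastforce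
next
  case (Cons x xs)
  have "teq2 sa sb [(u, x + sum_list xs)] ([(u, x)] @ [(u, sum_list xs)])"
    using teq2_addr by simp
  also have "teq2 sa sb ([(u, x)] @ [(u, sum_list xs)]) ([(u, x)] @ map (\<lambda>a. (u, a)) xs)"
    by (rule teq2_append[OF teq2_refl Cons])
  finally show ?case by simp
qed


section \<open>Transport of tensor identities\<close>

lemma lin_to_tensorD:
  assumes "lin_to_tensor sm sa sb D"
  shows "teq2 sa sb (D (x + y)) (D x @ D y)" "teq2 sa sb (D (sm r x)) (map (\<lambda>(u, v). (sa r u, v)) (D x))"
  using assms unfolding lin_to_tensor_def by auto

lemma k_linearD:
  assumes "k_linear sm sn f"
  shows "f (x + y) = f x + f y" "f (sm r x) = sn r (f x)"
  using assms unfolding k_linear_def by auto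

lemma k_linear_zero: "k_linear sm sn f \<Longrightarrow> f 0 = 0"
  using k_linearD(1)[of sm sn f 0 0] by simp

lemma k_linear_sum_list: "k_linear sm sn f \<Longrightarrow> f (sum_list xs) = sum_list (map f xs)"
  by (induction xs) (auto simp: k_linear_zero k_linearD)

lemma module_sum_list: "module s \<Longrightarrow> s r (sum_list xs) = sum_list (map (s r) xs)"
  by (induction xs) (auto simp: module.scale_right_distrib module.scale_zero_right)

lemma T2:
  fixes g :: "'a::ab_group_add \<Rightarrow> 'b::ab_group_add \<Rightarrow> ('c::ab_group_add \<times> 'd::ab_group_add) list"
  assumes "teq2 sa sb xs ys"
    and l1: "\<And>b. lin_to_tensor sa sc sd (\<lambda>a. g a b)" and l2: "\<And>a. lin_to_tensor sb sc sd (g a)"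
  shows "teq2 sc sd (concat (map (\<lambda>(a, b). g a b) xs)) (concat (map (\<lambda>(a, b). g a b) ys))"
proof -
  let ?K = "KT2 sc sd"
  let ?g = "\<lambda>p. tv (case p of (a, b) \<Rightarrow> g a b)"
  have "mc ?K (sum_list (map ?g xs)) (sum_list (map ?g ys))"
  proof (rule tensor2_transport[OF assms(1) subgrp_KT2])
    fix a a' b
    have "teq2 sc sd (g (a + a') b) (g a b @ g a' b)" using lin_to_tensorD(1)[OF l1] .
    then show "?g (a + a', b) - ?g (a, b) - ?g (a', b) \<in> ?K"
      by (simp add: teq2_iff mc_def diff_diff_eq)
  next
    fix a b b'
    have "teq2 sc sd (g a (b + b')) (g a b @ g a b')" using lin_to_tensorD(1)[OF l2] .
    then show "?g (a, b + b') - ?g (a, b) - ?g (a, b') \<in> ?K"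
      by (simp add: teq2_iff mc_def diff_diff_eq)
  next
    fix a b r
    have "teq2 sc sd (g (sa r a) b) (map (\<lambda>(u, v). (sc r u, v)) (g a b))" using lin_to_tensorD(2)[OF l1] .
    moreover have "teq2 sc sd (g a (sb r b)) (map (\<lambda>(u, v). (sc r u, v)) (g a b))" using lin_to_tensorD(2)[OF l2] .
    ultimately have "teq2 sc sd (g (sa r a) b) (g a (sb r b))" by (meson teq2_sym teq2_trans)
    then show "?g (sa r a, b) - ?g (a, sb r b) \<in> ?K" by (simp add: teq2_iff mc_def)
  qed
  then show ?thesis by (simp add: teq2_iff tv_concat_map split_def)
qed

lemma T3:
  fixes g :: "'a::ab_group_add \<Rightarrow> 'b::ab_group_add \<Rightarrow> 'e::ab_group_add \<Rightarrow> ('c::ab_group_add \<times> 'd::ab_group_add) list"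
  assumes "teq3 sa sb se xs ys"
    and l1: "\<And>b e. lin_to_tensor sa sc sd (\<lambda>a. g a b e)" and l2: "\<And>a e. lin_to_tensor sb sc sd (\<lambda>b. g a b e)"
    and l3: "\<And>a b. lin_to_tensor se sc sd (g a b)"
  shows "teq2 sc sd (concat (map (\<lambda>(a, b, e). g a b e) xs)) (concat (map (\<lambda>(a, b, e). g a b e) ys))"
proof -
  let ?K = "KT2 sc sd"
  let ?g = "\<lambda>p. tv (case p of (a, b, e) \<Rightarrow> g a b e)"
  have "mc ?K (sum_list (map ?g xs)) (sum_list (map ?g ys))"
  proof (rule tensor3_transport[OF assms(1) subgrp_KT2])
    fix a a' b e
    have "teq2 sc sd (g (a + a') b e) (g a b e @ g a' b e)" using lin_to_tensorD(1)[OF l1] .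
    then show "?g (a + a', b, e) - ?g (a, b, e) - ?g (a', b, e) \<in> ?K"
      by (simp add: teq2_iff mc_def diff_diff_eq)
  next
    fix a b b' e
    have "teq2 sc sd (g a (b + b') e) (g a b e @ g a b' e)" using lin_to_tensorD(1)[OF l2] .
    then show "?g (a, b + b', e) - ?g (a, b, e) - ?g (a, b', e) \<in> ?K"
      by (simp add: teq2_iff mc_def diff_diff_eq)
  next
    fix a b e e'
    have "teq2 sc sd (g a b (e + e')) (g a b e @ g a b e')" using lin_to_tensorD(1)[OF l3] .
    then show "?g (a, b, e + e') - ?g (a, b, e) - ?g (a, b, e') \<in> ?K"
      by (simp add: teq2_iff mc_def diff_diff_eq)
  next
    fix a b e r
    have "teq2 sc sd (g (sa r a) b e) (map (\<lambda>(u, v). (sc r u, v)) (g a b e))" using lin_to_tensorD(2)[OF l1] .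
    moreover have "teq2 sc sd (g a (sb r b) e) (map (\<lambda>(u, v). (sc r u, v)) (g a b e))" using lin_to_tensorD(2)[OF l2] .
    ultimately have "teq2 sc sd (g (sa r a) b e) (g a (sb r b) e)" by (meson teq2_sym teq2_trans)
    then show "?g (sa r a, b, e) - ?g (a, sb r b, e) \<in> ?K" by (simp add: teq2_iff mc_def)
  next
    fix a b e r
    have "teq2 sc sd (g a (sb r b) e) (map (\<lambda>(u, v). (sc r u, v)) (g a b e))" using lin_to_tensorD(2)[OF l2] .
    moreover have "teq2 sc sd (g a b (se r e)) (map (\<lambda>(u, v). (sc r u, v)) (g a b e))" using lin_to_tensorD(2)[OF l3] .
    ultimately have "teq2 sc sd (g a (sb r b) e) (g a b (se r e))" by (meson teq2_sym teq2_trans)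
    then show "?g (a, sb r b, e) - ?g (a, b, se r e) \<in> ?K" by (simp add: teq2_iff mc_def)
  qed
  then show ?thesis by (simp add: teq2_iff tv_concat_map split_def)
qed

lemma S2:
  fixes f :: "'a::ab_group_add \<Rightarrow> 'b::ab_group_add \<Rightarrow> 'm::ring_1"
  assumes "teq2 sa sb xs ys" "module sm"
    and l1: "\<And>b. k_linear sa sm (\<lambda>a. f a b)" and l2: "\<And>a. k_linear sb sm (f a)"
  shows "sum_list (map (\<lambda>(a, b). f a b) xs) = sum_list (map (\<lambda>(a, b). f a b) ys)"
proof -
  have "mc {0} (sum_list (map (\<lambda>p. case p of (a, b) \<Rightarrow> f a b) xs)) (sum_list (map (\<lambda>p. case p of (a, b) \<Rightarrow> f a b) ys))"
    by (rule tensor2_transport[OF assms(1) subgrp_zero])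
       (auto simp: k_linearD[OF l1] k_linearD[OF l2])
  then show ?thesis by simp
qed

lemma S3:
  fixes f :: "'a::ab_group_add \<Rightarrow> 'b::ab_group_add \<Rightarrow> 'e::ab_group_add \<Rightarrow> 'm::ring_1"
  assumes "teq3 sa sb se xs ys" "module sm"
    and l1: "\<And>b e. k_linear sa sm (\<lambda>a. f a b e)" and l2: "\<And>a e. k_linear sb sm (\<lambda>b. f a b e)"
    and l3: "\<And>a b. k_linear se sm (f a b)"
  shows "sum_list (map (\<lambda>(a, b, e). f a b e) xs) = sum_list (map (\<lambda>(a, b, e). f a b e) ys)"
proof -
  have "mc {0} (sum_list (map (\<lambda>p. case p of (a, b, e) \<Rightarrow> f a b e) xs)) (sum_list (map (\<lambda>p. case p of (a, b, e) \<Rightarrow> f a b e) ys))"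
    by (rule tensor3_transport[OF assms(1) subgrp_zero])
       (auto simp: k_linearD[OF l1] k_linearD[OF l2] k_linearD[OF l3])
  then show ?thesis by simp
qed

section \<open>Closure properties of linearity\<close>

lemma CS:
  fixes f :: "'a::ab_group_add \<Rightarrow> 'b::ab_group_add \<Rightarrow> 'm::ring_1"
  assumes D: "lin_to_tensor sx sa sb D" and m: "module sm"
    and l1: "\<And>b. k_linear sa sm (\<lambda>a. f a b)" and l2: "\<And>a. k_linear sb sm (f a)"
  shows "k_linear sx sm (\<lambda>x. sum_list (map (\<lambda>(a, b). f a b) (D x)))"
  unfolding k_linear_def
proof (intro conjI allI)
  fix x y
  show "sum_list (map (\<lambda>(a, b). f a b) (D (x + y))) =
        sum_list (map (\<lambda>(a, b). f a b) (D x)) + sum_list (map (\<lambda>(a, b). f a b) (D y))"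
    using S2[OF lin_to_tensorD(1)[OF D] m l1 l2] by simp
next
  fix r x
  have "sum_list (map (\<lambda>(a, b). f a b) (D (sx r x))) =
        sum_list (map (\<lambda>(a, b). f a b) (map (\<lambda>(u, v). (sa r u, v)) (D x)))"
    using S2[OF lin_to_tensorD(2)[OF D] m l1 l2] by simp
  also have "\<dots> = sum_list (map (\<lambda>p. sm r (case p of (a, b) \<Rightarrow> f a b)) (D x))"
    by (simp add: split_def o_def k_linearD[OF l1])
  also have "\<dots> = sm r (sum_list (map (\<lambda>(a, b). f a b) (D x)))"
    by (simp add: module_sum_list[OF m] o_def)
  finally show "sum_list (map (\<lambda>(a, b). f a b) (D (sx r x))) = sm r (sum_list (map (\<lambda>(a, b). f a b) (D x)))" .
qed

lemma CT:
  fixes g :: "'a::ab_group_add \<Rightarrow> 'b::ab_group_add \<Rightarrow> ('c::ab_group_add \<times> 'd::ab_group_add) list"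
  assumes D: "lin_to_tensor sx sa sb D"
    and l1: "\<And>b. lin_to_tensor sa sc sd (\<lambda>a. g a b)" and l2: "\<And>a. lin_to_tensor sb sc sd (g a)"
  shows "lin_to_tensor sx sc sd (\<lambda>x. concat (map (\<lambda>(a, b). g a b) (D x)))"
  unfolding lin_to_tensor_def
proof (intro conjI allI)
  fix x y
  show "teq2 sc sd (concat (map (\<lambda>(a, b). g a b) (D (x + y))))
         (concat (map (\<lambda>(a, b). g a b) (D x)) @ concat (map (\<lambda>(a, b). g a b) (D y)))"
    using T2[OF lin_to_tensorD(1)[OF D] l1 l2] by simp
next
  fix r x
  have "teq2 sc sd (concat (map (\<lambda>(a, b). g a b) (D (sx r x))))
        (concat (map (\<lambda>(a, b). g a b) (map (\<lambda>(u, v). (sa r u, v)) (D x))))"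
    using T2[OF lin_to_tensorD(2)[OF D] l1 l2] by simp
  also have "concat (map (\<lambda>(a, b). g a b) (map (\<lambda>(u, v). (sa r u, v)) (D x))) =
     concat (map (\<lambda>p. g (sa r (fst p)) (snd p)) (D x))"
    by (simp add: split_def o_def)
  also have "teq2 sc sd \<dots> (concat (map (\<lambda>p. map (\<lambda>(u, v). (sc r u, v)) (g (fst p) (snd p))) (D x)))"
    by (rule teq2_concat) (rule lin_to_tensorD(2)[OF l1])
  also have "concat (map (\<lambda>p. map (\<lambda>(u, v). (sc r u, v)) (g (fst p) (snd p))) (D x)) =
    map (\<lambda>(u, v). (sc r u, v)) (concat (map (\<lambda>(a, b). g a b) (D x)))"
    by (simp add: map_concat split_def o_def)
  finally show "teq2 sc sd (concat (map (\<lambda>(a, b). g a b) (D (sx r x))))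
     (map (\<lambda>(u, v). (sc r u, v)) (concat (map (\<lambda>(a, b). g a b) (D x))))" .
qed

lemma klin_sum:
  assumes "module sn" "\<And>i. i \<in> set L \<Longrightarrow> k_linear sm sn (f i)"
  shows "k_linear sm sn (\<lambda>x. sum_list (map (\<lambda>i. f i x) L))"
  using assms(2)
proof (induction L)
  case Nil
  then show ?case using assms(1) by (simp add: k_linear_def module.scale_zero_right)
next
  case (Cons a L)
  then have "k_linear sm sn (f a)" "k_linear sm sn (\<lambda>x. sum_list (map (\<lambda>i. f i x) L))" by auto
  then show ?case using assms(1) by (simp add: k_linear_def module.scale_right_distrib)
qed

lemma lin_concat:
  assumes "\<And>i. i \<in> set L \<Longrightarrow> lin_to_tensor sm sc sd (g i)"
  shows "lin_to_tensor sm sc sd (\<lambda>x. concat (map (\<lambda>i. g i x) L))"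
  unfolding lin_to_tensor_def
proof (intro conjI allI)
  fix x y
  have "teq2 sc sd (concat (map (\<lambda>i. g i (x + y)) L)) (concat (map (\<lambda>i. g i x @ g i y) L))"
    by (rule teq2_concat) (rule lin_to_tensorD(1)[OF assms])
  moreover have "tv (concat (map (\<lambda>i. g i x @ g i y) L)) = tv (concat (map (\<lambda>i. g i x) L) @ concat (map (\<lambda>i. g i y) L))"
    by (simp add: tv_concat_map sum_list_addf)
  ultimately show "teq2 sc sd (concat (map (\<lambda>i. g i (x + y)) L)) (concat (map (\<lambda>i. g i x) L) @ concat (map (\<lambda>i. g i y) L))"
    by (metis teq2_trans teq2_tvI)
next
  fix r x
  have "teq2 sc sd (concat (map (\<lambda>i. g i (sm r x)) L)) (concat (map (\<lambda>i. map (\<lambda>(u, v). (sc r u, v)) (g i x)) L))"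
    by (rule teq2_concat) (rule lin_to_tensorD(2)[OF assms])
  then show "teq2 sc sd (concat (map (\<lambda>i. g i (sm r x)) L)) (map (\<lambda>(u, v). (sc r u, v)) (concat (map (\<lambda>i. g i x) L)))"
    by (simp add: map_concat o_def)
qed

lemma lin_pair_l:
  assumes "k_linear sm sc f"
  shows "lin_to_tensor sm sc sd (\<lambda>x. [(f x, b)])"
  unfolding lin_to_tensor_def using assms
  by (auto simp: k_linearD teq2_addl teq2_refl)

lemma lin_pair_r:
  assumes "k_linear sm sd f"
  shows "lin_to_tensor sm sc sd (\<lambda>x. [(a, f x)])"
  unfolding lin_to_tensor_def using assms
  by (auto simp: k_linearD teq2_addr teq2_sym[OF teq2_scal])

lemma lin_comp:
  assumes "lin_to_tensor sm sa sb D" "k_linear sx sm f"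
  shows "lin_to_tensor sx sa sb (\<lambda>x. D (f x))"
  using assms unfolding lin_to_tensor_def k_linear_def by auto

lemma klin_comp:
  assumes "k_linear sm sn g" "k_linear sx sm f"
  shows "k_linear sx sn (\<lambda>x. g (f x))"
  using assms unfolding k_linear_def by auto

lemma klin_id: "k_linear s s (\<lambda>x. x)" by (simp add: k_linear_def)

lemma klin_mult_r:
  assumes "k_algebra sA" "k_linear sm sA f"
  shows "k_linear sm sA (\<lambda>x. f x * c)"
  using assms unfolding k_linear_def k_algebra_def by (auto simp: distrib_right)

lemma klin_mult_l:
  assumes "k_algebra sA" "k_linear sm sA f"
  shows "k_linear sm sA (\<lambda>x. c * f x)"
proof -
  have a: "\<And>r x y. sA r (x * y) = x * sA r y" using assms(1) unfolding k_algebra_def by blast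
  show ?thesis using assms(2) unfolding k_linear_def by (auto simp: distrib_left a)
qed

lemma klin_mult_id_l: "k_algebra sA \<Longrightarrow> k_linear sA sA (\<lambda>x. x * c)"
  by (rule klin_mult_r[OF _ klin_id])
lemma klin_mult_id_r: "k_algebra sA \<Longrightarrow> k_linear sA sA (\<lambda>x. c * x)"
  by (rule klin_mult_l[OF _ klin_id])



lemma sum_list_map_concat: "sum_list (map f (concat xss)) = sum_list (map (\<lambda>xs. sum_list (map f xs)) xss)"
  by (induction xss) auto

lemma sum_list_concat': "sum_list (concat xss) = sum_list (map sum_list xss)"
  by (induction xss) auto

lemma sum_list_swap:
  fixes f :: "'x \<Rightarrow> 'y \<Rightarrow> 'c::comm_monoid_add"
  shows "sum_list (map (\<lambda>x. sum_list (map (\<lambda>y. f x y) ys)) xs) = sum_list (map (\<lambda>y. sum_list (map (\<lambda>x. f x y) xs)) ys)"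
  by (induction xs) (auto simp: sum_list_addf)

lemma swap_pp:
  fixes f :: "'x1 \<Rightarrow> 'x2 \<Rightarrow> 'y1 \<Rightarrow> 'y2 \<Rightarrow> 'c::comm_monoid_add"
  shows "sum_list (map (\<lambda>(a, b). sum_list (map (\<lambda>(c, d). f a b c d) ys)) xs) =
   sum_list (map (\<lambda>(c, d). sum_list (map (\<lambda>(a, b). f a b c d) xs)) ys)"
  unfolding split_def by (rule sum_list_swap)

lemma move2:
  fixes F :: "'i \<Rightarrow> 'x1 \<Rightarrow> 'x2 \<Rightarrow> 'c::comm_monoid_add"
  shows "sum_list (map (\<lambda>i. sum_list (map (\<lambda>p1. sum_list (map (\<lambda>p2. F i p1 p2) (L2 p1))) L1)) I) =
    sum_list (map (\<lambda>p1. sum_list (map (\<lambda>p2. sum_list (map (\<lambda>i. F i p1 p2) I)) (L2 p1))) L1)"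
  by (induction I) (auto simp: sum_list_addf)

lemma move4:
  fixes F :: "'i \<Rightarrow> 'x1 \<Rightarrow> 'x2 \<Rightarrow> 'x3 \<Rightarrow> 'x4 \<Rightarrow> 'c::comm_monoid_add"
  shows "sum_list (map (\<lambda>i. sum_list (map (\<lambda>p1. sum_list (map (\<lambda>p2. sum_list (map (\<lambda>p3.
       sum_list (map (\<lambda>p4. F i p1 p2 p3 p4) (L4 p3))) (L3 p2))) (L2 p1))) L1)) I) =
    sum_list (map (\<lambda>p1. sum_list (map (\<lambda>p2. sum_list (map (\<lambda>p3.
       sum_list (map (\<lambda>p4. sum_list (map (\<lambda>i. F i p1 p2 p3 p4) I)) (L4 p3))) (L3 p2))) (L2 p1))) L1)"
  by (induction I) (auto simp: sum_list_addf)

lemma concat_map_concat: "concat (map f (concat xss)) = concat (map (\<lambda>xs. concat (map f xs)) xss)"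
  by (induction xss) auto

lemma teq2_swap:
  "teq2 sa sb (concat (map (\<lambda>x. concat (map (\<lambda>y. f x y) ys)) xs)) (concat (map (\<lambda>y. concat (map (\<lambda>x. f x y) xs)) ys))"
  by (rule teq2_tvI) (simp add: tv_concat_map sum_list_swap[of "\<lambda>x y. tv (f x y)"])

lemma teq2_move2:
  "teq2 sa sb (concat (map (\<lambda>i. concat (map (\<lambda>p1. concat (map (\<lambda>p2. F i p1 p2) (L2 p1))) L1)) I))
    (concat (map (\<lambda>p1. concat (map (\<lambda>p2. concat (map (\<lambda>i. F i p1 p2) I)) (L2 p1))) L1))"
  by (rule teq2_tvI) (simp add: tv_concat_map move2[of "\<lambda>i p1 p2. tv (F i p1 p2)"])

lemma lin_concat2: "(\<And>a b. (a, b) \<in> set L \<Longrightarrow> lin_to_tensor sm sc sd (\<lambda>x. g a b x)) \<Longrightarrow>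
    lin_to_tensor sm sc sd (\<lambda>x. concat (map (\<lambda>(a, b). g a b x) L))"
  using lin_concat[where L=L and g="\<lambda>i x. case i of (a, b) \<Rightarrow> g a b x" and sm=sm and sc=sc and sd=sd]
  by (auto simp: split_def)

lemma map_as_concat: "map f xs = concat (map (\<lambda>x. [f x]) xs)"
  by (induction xs) auto

lemma lin_zero: assumes "lin_to_tensor sm sa sb D" shows "teq2 sa sb (D 0) []"
proof -
  have "teq2 sa sb ([] @ D 0) (D 0 @ D 0)" using lin_to_tensorD(1)[OF assms, of 0 0] by simp
  then have "teq2 sa sb [] (D 0)" by (rule teq2_cancel)
  then show ?thesis by (rule teq2_sym)
qed

lemma lin_sum: "lin_to_tensor sm sa sb D \<Longrightarrow> teq2 sa sb (D (sum_list (map f L))) (concat (map (\<lambda>i. D (f i)) L))"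
proof (induction L)
  case Nil then show ?case by (simp add: lin_zero)
next
  case (Cons a L)
  have "teq2 sa sb (D (f a + sum_list (map f L))) (D (f a) @ D (sum_list (map f L)))"
    by (rule lin_to_tensorD(1)[OF Cons(2)])
  also have "teq2 sa sb \<dots> (D (f a) @ concat (map (\<lambda>i. D (f i)) L))"
    by (rule teq2_append[OF teq2_refl Cons(1)[OF Cons(2)]])
  finally show ?case by simp
qed

lemma lin_sum2: "lin_to_tensor sm sa sb D \<Longrightarrow>
    teq2 sa sb (D (sum_list (map (\<lambda>(a, b). f a b) L))) (concat (map (\<lambda>(a, b). D (f a b)) L))"
  using lin_sum[of sm sa sb D "\<lambda>(a, b). f a b" L] by (simp add: split_def)

lemma teq2_concat_pair: "(\<And>a b. (a, b) \<in> set L \<Longrightarrow> teq2 sa sb (f a b) (g a b)) \<Longrightarrow>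
    teq2 sa sb (concat (map (\<lambda>(a, b). f a b) L)) (concat (map (\<lambda>(a, b). g a b) L))"
  by (rule teq2_concat) auto

lemma concat_concat': "concat (concat xss) = concat (map concat xss)"
  by (induction xss) auto

lemma tv_map: "tv (map f xs) = sum_list (map (\<lambda>x. tv [f x]) xs)"
  by (induction xs) (auto simp: tv_Cons)

locale doi =
  fixes sH :: "'k::comm_ring_1 \<Rightarrow> 'h::ring_1 \<Rightarrow> 'h"
    and DH :: "'h \<Rightarrow> ('h \<times> 'h) list" and eH :: "'h \<Rightarrow> 'k"
    and sA :: "'k \<Rightarrow> 'a::ring_1 \<Rightarrow> 'a" and rho :: "'a \<Rightarrow> ('h \<times> 'a) list"
    and sC :: "'k \<Rightarrow> 'c::ab_group_add \<Rightarrow> 'c" and DC :: "'c \<Rightarrow> ('c \<times> 'c) list"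
    and eC :: "'c \<Rightarrow> 'k" and act :: "'c \<Rightarrow> 'h \<Rightarrow> 'c"
  assumes datum: "doi_hopf_datum sH DH eH sA rho sC DC eC act"
begin

lemma bialg: "bialgebra sH DH eH" and comod: "left_comodule_algebra sH DH eH sA rho"
  and rmc: "right_module_coalgebra sH DH eH sC DC eC act"
  using datum unfolding doi_hopf_datum_def by auto

lemma algA: "k_algebra sA" using comod unfolding left_comodule_algebra_def by auto
lemma modA: "module sA" using algA unfolding k_algebra_def by auto
lemma coalgC: "k_coalgebra sC DC eC" using rmc unfolding right_module_coalgebra_def by auto
lemma modC: "module sC" using coalgC unfolding k_coalgebra_def by auto
lemma linDC: "lin_to_tensor sC sC sC DC" using coalgC unfolding k_coalgebra_def by auto
lemma coassC: "teq3 sC sC sC [(x1, x2, y). (x, y) \<leftarrow> DC c, (x1, x2) \<leftarrow> DC x]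
                     [(x, y1, y2). (x, y) \<leftarrow> DC c, (y1, y2) \<leftarrow> DC y]"
  using coalgC unfolding k_coalgebra_def by auto
lemma counitC: "sum_list (map (\<lambda>(x, y). sC (eC x) y) (DC c)) = c"
  using coalgC unfolding k_coalgebra_def by auto
lemma coalgH: "k_coalgebra sH DH eH" using bialg unfolding bialgebra_def by auto
lemma algH: "k_algebra sH" using bialg unfolding bialgebra_def by auto
lemma modH: "module sH" using algH unfolding k_algebra_def by auto
lemma linDH: "lin_to_tensor sH sH sH DH" using coalgH unfolding k_coalgebra_def by auto
lemma linrho: "lin_to_tensor sA sH sA rho" using comod unfolding left_comodule_algebra_def by auto
lemma coassrho: "teq3 sH sH sA [(h1, h2, a). (h, a) \<leftarrow> rho m, (h1, h2) \<leftarrow> DH h]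
                        [(h, h', a'). (h, a) \<leftarrow> rho m, (h', a') \<leftarrow> rho a]"
  using comod unfolding left_comodule_algebra_def by auto
lemma multrho: "teq2 sH sA (rho (a * b)) [(h * h', a' * b'). (h, a') \<leftarrow> rho a, (h', b') \<leftarrow> rho b]"
  using comod unfolding left_comodule_algebra_def by auto
lemma act_add1: "act (c + c') h = act c h + act c' h" using rmc unfolding right_module_coalgebra_def by auto
lemma act_add2: "act c (h + h') = act c h + act c h'" using rmc unfolding right_module_coalgebra_def by auto
lemma act_scal1: "act (sC r c) h = sC r (act c h)" using rmc unfolding right_module_coalgebra_def by auto
lemma act_scal2: "act c (sH r h) = sC r (act c h)" using rmc unfolding right_module_coalgebra_def by auto
lemma act_mult: "act c (g * h) = act (act c g) h" using rmc unfolding right_module_coalgebra_def by auto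
lemma DC_act: "teq2 sC sC (DC (act c h)) [(act x h1, act y h2). (x, y) \<leftarrow> DC c, (h1, h2) \<leftarrow> DH h]"
  using rmc unfolding right_module_coalgebra_def by auto

lemma klin_act1: "k_linear sC sC (\<lambda>c. act c h)" by (simp add: k_linear_def act_add1 act_scal1)
lemma klin_act2: "k_linear sH sC (act c)" by (simp add: k_linear_def act_add2 act_scal2)

abbreviation "VV \<equiv> V3 sH sA rho sC DC act"

lemma V3_lin1: "\<theta> \<in> VV \<Longrightarrow> k_linear sC sA (\<lambda>c. \<theta> c d)"
  and V3_lin2: "\<theta> \<in> VV \<Longrightarrow> k_linear sC sA (\<theta> c)"
  unfolding V3_def k_bilinear_def by auto
lemma V3_c1: "\<theta> \<in> VV \<Longrightarrow> \<theta> c d * a =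
        sum_list [a00 * \<theta> (act c hm2) (act d hm1). (hm2, a0) \<leftarrow> rho a, (hm1, a00) \<leftarrow> rho a0]"
  unfolding V3_def by auto
lemma V3_c2: "\<theta> \<in> VV \<Longrightarrow> teq2 sC sA [(c1, \<theta> c2 d). (c1, c2) \<leftarrow> DC c]
                       [(act d2 hm1, a0). (d1, d2) \<leftarrow> DC d, (hm1, a0) \<leftarrow> rho (\<theta> c d1)]"
  unfolding V3_def by auto

lemma formula:
  assumes t: "\<theta> \<in> VV" and t': "\<theta>' \<in> VV"
  shows "kop_prod DC act rho \<theta> \<theta>' c d = sum_list [\<theta> c3 d * \<theta>' c1 c2. (x, c3) \<leftarrow> DC c, (c1, c2) \<leftarrow> DC x]"
proof -
  have 1: "sum_list (map (\<lambda>(y, a). a * \<theta>' c1 y) [(act d2 hm1, a0). (d1, d2) \<leftarrow> DC d, (hm1, a0) \<leftarrow> rho (\<theta> c2 d1)])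
     = sum_list (map (\<lambda>(y, a). a * \<theta>' c1 y) [(y1, \<theta> y2 d). (y1, y2) \<leftarrow> DC c2])" for c1 c2
    by (rule S2[OF teq2_sym[OF V3_c2[OF t]] modA])
       (auto intro: klin_mult_l[OF algA V3_lin2[OF t']] klin_mult_id_l[OF algA])
  have 2: "sum_list (map (\<lambda>(u, v, w). \<theta> w d * \<theta>' u v) [(x1, x2, y). (x, y) \<leftarrow> DC c, (x1, x2) \<leftarrow> DC x])
     = sum_list (map (\<lambda>(u, v, w). \<theta> w d * \<theta>' u v) [(x, y1, y2). (x, y) \<leftarrow> DC c, (y1, y2) \<leftarrow> DC y])"
    by (rule S3[OF coassC modA])
       (auto intro: klin_mult_l[OF algA V3_lin1[OF t']] klin_mult_l[OF algA V3_lin2[OF t']]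
          klin_mult_r[OF algA V3_lin1[OF t]])
  show ?thesis
    using 1 2 by (simp add: kop_prod_def sum_list_map_concat sum_list_concat' map_concat o_def split_def)
qed


lemma CSC: "(\<And>b. k_linear sC sA (\<lambda>a. f a b)) \<Longrightarrow> (\<And>a. k_linear sC sA (f a)) \<Longrightarrow>
    k_linear sC sA (\<lambda>x. sum_list (map (\<lambda>(a, b). f a b) (DC x)))"
  by (rule CS[OF linDC modA])

lemma klin_sum2: "(\<And>a b. (a, b) \<in> set L \<Longrightarrow> k_linear sm sA (\<lambda>x. f a b x)) \<Longrightarrow>
    k_linear sm sA (\<lambda>x. sum_list (map (\<lambda>(a, b). f a b x) L))"
  using klin_sum[OF modA, where L=L and f="\<lambda>i x. case i of (a, b) \<Rightarrow> f a b x" and sm=sm] by (auto simp: split_def)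

lemma psi_nested: "sum_list [\<theta> c3 d * \<theta>' c1 c2. (x, c3) \<leftarrow> DC c, (c1, c2) \<leftarrow> DC x] =
   sum_list (map (\<lambda>(x, c3). sum_list (map (\<lambda>(c1, c2). \<theta> c3 d * \<theta>' c1 c2) (DC x))) (DC c))"
  by (simp add: sum_list_concat' o_def split_def)

lemma psi_bilin:
  assumes t: "\<theta> \<in> VV" and t': "\<theta>' \<in> VV"
  shows "k_bilinear sC sA (\<lambda>c d. sum_list [\<theta> c3 d * \<theta>' c1 c2. (x, c3) \<leftarrow> DC c, (c1, c2) \<leftarrow> DC x])"
  unfolding k_bilinear_def psi_nested
proof (intro conjI allI)
  fix d
  show "k_linear sC sA (\<lambda>c. sum_list (map (\<lambda>(x, c3). sum_list (map (\<lambda>(c1, c2). \<theta> c3 d * \<theta>' c1 c2) (DC x))) (DC c)))"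
    by (intro CSC klin_sum2 klin_mult_l[OF algA V3_lin1[OF t']] klin_mult_l[OF algA V3_lin2[OF t']]
          klin_mult_r[OF algA V3_lin1[OF t]])
next
  fix c
  show "k_linear sC sA (\<lambda>d. sum_list (map (\<lambda>(x, c3). sum_list (map (\<lambda>(c1, c2). \<theta> c3 d * \<theta>' c1 c2) (DC x))) (DC c)))"
    by (intro klin_sum2 klin_mult_r[OF algA V3_lin2[OF t]])
qed

lemma right_unit:
  assumes t: "\<theta> \<in> VV" and t': "\<theta>' \<in> VV" and n: "normalized sA DC eC \<theta>"
  shows "kop_prod DC act rho \<theta>' \<theta> = \<theta>'"
proof (intro ext)
  fix c d
  have a: "\<And>r x y. sA r (x * y) = x * sA r y" using algA unfolding k_algebra_def by blast
  have n': "sum_list (map (\<lambda>(c1, c2). \<theta> c1 c2) (DC x)) = sA (eC x) 1" for x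
    using n unfolding normalized_def by auto
  have "kop_prod DC act rho \<theta>' \<theta> c d =
      sum_list (map (\<lambda>(x, c3). sum_list (map (\<lambda>(c1, c2). \<theta>' c3 d * \<theta> c1 c2) (DC x))) (DC c))"
    by (simp add: formula[OF t' t] psi_nested)
  also have "\<dots> = sum_list (map (\<lambda>(x, c3). \<theta>' c3 d * sum_list (map (\<lambda>(c1, c2). \<theta> c1 c2) (DC x))) (DC c))"
    by (simp add: sum_list_const_mult split_def)
  also have "\<dots> = sum_list (map (\<lambda>(x, c3). \<theta>' (sC (eC x) c3) d) (DC c))"
    by (rule arg_cong[where f=sum_list], rule map_cong)
       (auto simp: n' a[symmetric] k_linearD[OF V3_lin1[OF t']])
  also have "\<dots> = \<theta>' (sum_list (map (\<lambda>(x, c3). sC (eC x) c3) (DC c))) d"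
    by (simp add: k_linear_sum_list[OF V3_lin1[OF t']] o_def split_def)
  also have "\<dots> = \<theta>' c d" by (simp add: counitC)
  finally show "kop_prod DC act rho \<theta>' \<theta> c d = \<theta>' c d" .
qed


lemma CSH: "(\<And>b. k_linear sH sA (\<lambda>a. f a b)) \<Longrightarrow> (\<And>a. k_linear sH sA (f a)) \<Longrightarrow>
    k_linear sH sA (\<lambda>x. sum_list (map (\<lambda>(a, b). f a b) (DH x)))"
  by (rule CS[OF linDH modA])

lemma CSrho: "(\<And>b. k_linear sH sA (\<lambda>a. f a b)) \<Longrightarrow> (\<And>a. k_linear sA sA (f a)) \<Longrightarrow>
    k_linear sA sA (\<lambda>x. sum_list (map (\<lambda>(a, b). f a b) (rho x)))"
  by (rule CS[OF linrho modA])

lemma CR: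
  assumes "\<And>h2 b. k_linear sH sA (\<lambda>h1. f h1 h2 b)" "\<And>h1 b. k_linear sH sA (\<lambda>h2. f h1 h2 b)"
    "\<And>h1 h2. k_linear sA sA (f h1 h2)"
  shows "sum_list (map (\<lambda>(h, b). sum_list (map (\<lambda>(h1, h2). f h1 h2 b) (DH h))) (rho m)) =
         sum_list (map (\<lambda>(h, b). sum_list (map (\<lambda>(h', b'). f h h' b') (rho b))) (rho m))"
  using S3[OF coassrho modA, of f, OF assms]
  by (simp add: sum_list_concat' sum_list_map_concat o_def split_def)

lemma HL:
  fixes \<Phi> :: "'h \<Rightarrow> 'h \<Rightarrow> 'h \<Rightarrow> 'h \<Rightarrow> 'a \<Rightarrow> 'a"
  assumes l1: "\<And>h2 h3 h4 b. k_linear sH sA (\<lambda>h1. \<Phi> h1 h2 h3 h4 b)"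
    and l2: "\<And>h1 h3 h4 b. k_linear sH sA (\<lambda>h2. \<Phi> h1 h2 h3 h4 b)"
    and l3: "\<And>h1 h2 h4 b. k_linear sH sA (\<lambda>h3. \<Phi> h1 h2 h3 h4 b)"
    and l4: "\<And>h1 h2 h3 b. k_linear sH sA (\<lambda>h4. \<Phi> h1 h2 h3 h4 b)"
    and l5: "\<And>h1 h2 h3 h4. k_linear sA sA (\<Phi> h1 h2 h3 h4)"
  shows "sum_list (map (\<lambda>(m2, e0). sum_list (map (\<lambda>(m1, e00). sum_list (map (\<lambda>(n1, n2).
            sum_list (map (\<lambda>(n11, n12). \<Phi> n11 n12 n2 m1 e00) (DH n1))) (DH m2))) (rho e0))) (rho a)) =
         sum_list (map (\<lambda>(h1, a1). sum_list (map (\<lambda>(h2, a2). sum_list (map (\<lambda>(h3, a3).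
            sum_list (map (\<lambda>(h4, a4). \<Phi> h1 h2 h3 h4 a4) (rho a3))) (rho a2))) (rho a1))) (rho a))"
proof -
  define f1 where "f1 n1 n2 e0 = sum_list (map (\<lambda>(m1, e00). sum_list (map (\<lambda>(n11, n12). \<Phi> n11 n12 n2 m1 e00) (DH n1))) (rho e0))" for n1 n2 e0
  define f2 where "f2 n11 n12 e1 = sum_list (map (\<lambda>(n2, e0). sum_list (map (\<lambda>(m1, e00). \<Phi> n11 n12 n2 m1 e00) (rho e0))) (rho e1))" for n11 n12 e1
  have "sum_list (map (\<lambda>(m2, e0). sum_list (map (\<lambda>(m1, e00). sum_list (map (\<lambda>(n1, n2).
            sum_list (map (\<lambda>(n11, n12). \<Phi> n11 n12 n2 m1 e00) (DH n1))) (DH m2))) (rho e0))) (rho a)) =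
        sum_list (map (\<lambda>(m2, e0). sum_list (map (\<lambda>(n1, n2). f1 n1 n2 e0) (DH m2))) (rho a))"
    unfolding f1_def
    by (rule arg_cong[where f=sum_list], rule map_cong[OF refl], clarify, rule swap_pp)
  also have "\<dots> = sum_list (map (\<lambda>(n1, e1). sum_list (map (\<lambda>(n2, e0). f1 n1 n2 e0) (rho e1))) (rho a))"
    by (rule CR) (unfold f1_def; intro klin_sum2 CSH CSrho l1 l2 l3 l4 l5)+
  also have "\<dots> = sum_list (map (\<lambda>(n1, e1). sum_list (map (\<lambda>(n11, n12). f2 n11 n12 e1) (DH n1))) (rho a))"
  proof (rule arg_cong[where f=sum_list], rule map_cong[OF refl], clarify)
    fix n1 e1
    have "sum_list (map (\<lambda>(n2, e0). f1 n1 n2 e0) (rho e1)) =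
      sum_list (map (\<lambda>(n2, e0). sum_list (map (\<lambda>(n11, n12). sum_list (map (\<lambda>(m1, e00). \<Phi> n11 n12 n2 m1 e00) (rho e0))) (DH n1))) (rho e1))"
      unfolding f1_def
      by (rule arg_cong[where f=sum_list], rule map_cong[OF refl], clarify, rule swap_pp)
    also have "\<dots> = sum_list (map (\<lambda>(n11, n12). f2 n11 n12 e1) (DH n1))"
      unfolding f2_def by (rule swap_pp)
    finally show "sum_list (map (\<lambda>(n2, e0). f1 n1 n2 e0) (rho e1)) = sum_list (map (\<lambda>(n11, n12). f2 n11 n12 e1) (DH n1))" .
  qed
  also have "\<dots> = sum_list (map (\<lambda>(n11, e2). sum_list (map (\<lambda>(n12, e1). f2 n11 n12 e1) (rho e2))) (rho a))"
    by (rule CR) (unfold f2_def; intro klin_sum2 CSH CSrho l1 l2 l3 l4 l5)+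
  also have "\<dots> = sum_list (map (\<lambda>(h1, a1). sum_list (map (\<lambda>(h2, a2). sum_list (map (\<lambda>(h3, a3).
            sum_list (map (\<lambda>(h4, a4). \<Phi> h1 h2 h3 h4 a4) (rho a3))) (rho a2))) (rho a1))) (rho a))"
    unfolding f2_def by simp
  finally show ?thesis .
qed


definition psi where
  "psi \<theta> \<theta>' c d = sum_list (map (\<lambda>(x, c3). sum_list (map (\<lambda>(c1, c2). \<theta> c3 d * \<theta>' c1 c2) (DC x))) (DC c))"

definition PP where
  "PP \<theta> \<theta>' c h1 h2 h3 e = sum_list (map (\<lambda>(x, c3). sum_list (map (\<lambda>(c1, c2).
      \<theta> (act c3 h3) e * \<theta>' (act c1 h1) (act c2 h2)) (DC x))) (DC c))"

lemma psi_act: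
  assumes t: "\<theta> \<in> VV" and t': "\<theta>' \<in> VV"
  shows "psi \<theta> \<theta>' (act c m) e = sum_list (map (\<lambda>(n1, n2). sum_list (map (\<lambda>(n11, n12).
            PP \<theta> \<theta>' c n11 n12 n2 e) (DH n1))) (DH m))"
proof -
  define I where "I y z3 = sum_list (map (\<lambda>(z1, z2). \<theta> z3 e * \<theta>' z1 z2) (DC y))" for y z3
  have I1: "I (act x n1) w = sum_list (map (\<lambda>(c1, c2). sum_list (map (\<lambda>(n11, n12).
        \<theta> w e * \<theta>' (act c1 n11) (act c2 n12)) (DH n1))) (DC x))" for x n1 w
    unfolding I_def
    using S2[OF DC_act modA, of "\<lambda>z1 z2. \<theta> w e * \<theta>' z1 z2" x n1]
    by (simp add: sum_list_concat' sum_list_map_concat o_def split_def klin_mult_l[OF algA V3_lin1[OF t']] klin_mult_l[OF algA V3_lin2[OF t']])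
  have "psi \<theta> \<theta>' (act c m) e = sum_list (map (\<lambda>(y, z3). I y z3) (DC (act c m)))"
    unfolding psi_def I_def by simp
  also have "\<dots> = sum_list (map (\<lambda>(y, z3). I y z3) [(act x h1, act y h2). (x, y) \<leftarrow> DC c, (h1, h2) \<leftarrow> DH m])"
    by (rule S2[OF DC_act modA]) (unfold I_def; intro CSC klin_sum2 klin_mult_l[OF algA V3_lin1[OF t']]
         klin_mult_l[OF algA V3_lin2[OF t']] klin_mult_r[OF algA V3_lin1[OF t]])+
  also have "\<dots> = sum_list (map (\<lambda>(x, c3). sum_list (map (\<lambda>(n1, n2). sum_list (map (\<lambda>(c1, c2). sum_list (map (\<lambda>(n11, n12).
        \<theta> (act c3 n2) e * \<theta>' (act c1 n11) (act c2 n12)) (DH n1))) (DC x))) (DH m))) (DC c))"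
    by (simp add: I1 sum_list_concat' sum_list_map_concat o_def split_def)
  also have "\<dots> = sum_list (map (\<lambda>(x, c3). sum_list (map (\<lambda>(c1, c2). sum_list (map (\<lambda>(n1, n2). sum_list (map (\<lambda>(n11, n12).
        \<theta> (act c3 n2) e * \<theta>' (act c1 n11) (act c2 n12)) (DH n1))) (DH m))) (DC x))) (DC c))"
    unfolding split_def by (rule arg_cong[where f=sum_list], rule map_cong[OF refl], rule sum_list_swap)
  also have "\<dots> = sum_list (map (\<lambda>(x, c3). sum_list (map (\<lambda>(n1, n2). sum_list (map (\<lambda>(n11, n12). sum_list (map (\<lambda>(c1, c2).
        \<theta> (act c3 n2) e * \<theta>' (act c1 n11) (act c2 n12)) (DC x))) (DH n1))) (DH m))) (DC c))"
    unfolding split_def by (rule arg_cong[where f=sum_list], rule map_cong[OF refl], rule move2)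
  also have "\<dots> = sum_list (map (\<lambda>(n1, n2). sum_list (map (\<lambda>(n11, n12). sum_list (map (\<lambda>(x, c3). sum_list (map (\<lambda>(c1, c2).
        \<theta> (act c3 n2) e * \<theta>' (act c1 n11) (act c2 n12)) (DC x))) (DC c))) (DH n1))) (DH m))"
    unfolding split_def by (rule move2)
  also have "\<dots> = sum_list (map (\<lambda>(n1, n2). sum_list (map (\<lambda>(n11, n12).
            PP \<theta> \<theta>' c n11 n12 n2 e) (DH n1))) (DH m))"
    unfolding PP_def by simp
  finally show ?thesis .
qed


lemma PP_lin:
  assumes t: "\<theta> \<in> VV" and t': "\<theta>' \<in> VV"
  shows "k_linear sH sA (\<lambda>h1. PP \<theta> \<theta>' c h1 h2 h3 e)" "k_linear sH sA (\<lambda>h2. PP \<theta> \<theta>' c h1 h2 h3 e)"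
    "k_linear sH sA (\<lambda>h3. PP \<theta> \<theta>' c h1 h2 h3 e)" "k_linear sC sA (\<lambda>e. PP \<theta> \<theta>' c h1 h2 h3 e)"
  unfolding PP_def
  by (intro klin_sum2 klin_mult_l[OF algA] klin_mult_r[OF algA] klin_comp[OF V3_lin1[OF t'] klin_act2]
      klin_comp[OF V3_lin2[OF t'] klin_act2] klin_comp[OF V3_lin1[OF t] klin_act2] V3_lin2[OF t])+

lemma LT:
  assumes t: "\<theta> \<in> VV" and t': "\<theta>' \<in> VV"
  shows "\<theta> c3 d * \<theta>' c1 c2 * a = sum_list (map (\<lambda>(h1, a1). sum_list (map (\<lambda>(h2, a2). sum_list (map (\<lambda>(h3, a3).
            sum_list (map (\<lambda>(h4, a4). a4 * (\<theta> (act c3 h3) (act d h4) * \<theta>' (act c1 h1) (act c2 h2))) (rho a3))) (rho a2))) (rho a1))) (rho a))"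
proof -
  have A: "\<theta>' c1 c2 * a = sum_list (map (\<lambda>(h1, a1). sum_list (map (\<lambda>(h2, a2). a2 * \<theta>' (act c1 h1) (act c2 h2)) (rho a1))) (rho a))"
    using V3_c1[OF t', of c1 c2 a] by (simp add: sum_list_concat' o_def split_def)
  have B: "\<theta> c3 d * a2 = sum_list (map (\<lambda>(h3, a3). sum_list (map (\<lambda>(h4, a4). a4 * \<theta> (act c3 h3) (act d h4)) (rho a3))) (rho a2))" for a2
    using V3_c1[OF t, of c3 d a2] by (simp add: sum_list_concat' o_def split_def)
  have "\<theta> c3 d * \<theta>' c1 c2 * a = \<theta> c3 d * (\<theta>' c1 c2 * a)" by (simp add: mult.assoc)
  also have "\<dots> = sum_list (map (\<lambda>(h1, a1). sum_list (map (\<lambda>(h2, a2). (\<theta> c3 d * a2) * \<theta>' (act c1 h1) (act c2 h2)) (rho a1))) (rho a))"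
    by (simp add: A sum_list_const_mult[symmetric] split_def mult.assoc o_def)
  also have "\<dots> = sum_list (map (\<lambda>(h1, a1). sum_list (map (\<lambda>(h2, a2). sum_list (map (\<lambda>(h3, a3).
            sum_list (map (\<lambda>(h4, a4). a4 * (\<theta> (act c3 h3) (act d h4) * \<theta>' (act c1 h1) (act c2 h2))) (rho a3))) (rho a2))) (rho a1))) (rho a))"
    by (simp add: B sum_list_mult_const[symmetric] split_def mult.assoc o_def)
  finally show ?thesis .
qed

lemma cond1:
  assumes t: "\<theta> \<in> VV" and t': "\<theta>' \<in> VV"
  shows "psi \<theta> \<theta>' c d * a =
        sum_list [a00 * psi \<theta> \<theta>' (act c hm2) (act d hm1). (hm2, a0) \<leftarrow> rho a, (hm1, a00) \<leftarrow> rho a0]"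
proof -
  define \<Phi> where "\<Phi> h1 h2 h3 h4 b = b * PP \<theta> \<theta>' c h1 h2 h3 (act d h4)" for h1 h2 h3 h4 b
  have "psi \<theta> \<theta>' c d * a = sum_list (map (\<lambda>(x, c3). sum_list (map (\<lambda>(c1, c2). \<theta> c3 d * \<theta>' c1 c2 * a) (DC x))) (DC c))"
    by (simp add: psi_def sum_list_mult_const split_def)
  also have "\<dots> = sum_list (map (\<lambda>(x, c3). sum_list (map (\<lambda>(c1, c2).
     sum_list (map (\<lambda>(h1, a1). sum_list (map (\<lambda>(h2, a2). sum_list (map (\<lambda>(h3, a3).
            sum_list (map (\<lambda>(h4, a4). a4 * (\<theta> (act c3 h3) (act d h4) * \<theta>' (act c1 h1) (act c2 h2))) (rho a3))) (rho a2))) (rho a1))) (rho a))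
     ) (DC x))) (DC c))"
    by (rule arg_cong[where f=sum_list], rule map_cong[OF refl], clarify,
        rule arg_cong[where f=sum_list], rule map_cong[OF refl], clarify, rule LT[OF t t'])
  also have "\<dots> = sum_list (map (\<lambda>(x, c3).
     sum_list (map (\<lambda>(h1, a1). sum_list (map (\<lambda>(h2, a2). sum_list (map (\<lambda>(h3, a3).
            sum_list (map (\<lambda>(h4, a4). sum_list (map (\<lambda>(c1, c2).
             a4 * (\<theta> (act c3 h3) (act d h4) * \<theta>' (act c1 h1) (act c2 h2))) (DC x))) (rho a3))) (rho a2))) (rho a1))) (rho a))
     ) (DC c))"
    unfolding split_def by (rule arg_cong[where f=sum_list], rule map_cong[OF refl], rule move4)
  also have "\<dots> = sum_list (map (\<lambda>(h1, a1). sum_list (map (\<lambda>(h2, a2). sum_list (map (\<lambda>(h3, a3).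
            sum_list (map (\<lambda>(h4, a4). sum_list (map (\<lambda>(x, c3). sum_list (map (\<lambda>(c1, c2).
             a4 * (\<theta> (act c3 h3) (act d h4) * \<theta>' (act c1 h1) (act c2 h2))) (DC x))) (DC c))) (rho a3))) (rho a2))) (rho a1))) (rho a))"
    unfolding split_def by (rule move4)
  also have "\<dots> = sum_list (map (\<lambda>(h1, a1). sum_list (map (\<lambda>(h2, a2). sum_list (map (\<lambda>(h3, a3).
            sum_list (map (\<lambda>(h4, a4). \<Phi> h1 h2 h3 h4 a4) (rho a3))) (rho a2))) (rho a1))) (rho a))"
    by (simp add: \<Phi>_def PP_def sum_list_const_mult split_def)
  also have "\<dots> = sum_list (map (\<lambda>(m2, e0). sum_list (map (\<lambda>(m1, e00). sum_list (map (\<lambda>(n1, n2).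
            sum_list (map (\<lambda>(n11, n12). \<Phi> n11 n12 n2 m1 e00) (DH n1))) (DH m2))) (rho e0))) (rho a))"
    by (rule HL[symmetric]; unfold \<Phi>_def;
        intro klin_mult_l[OF algA] klin_mult_id_l[OF algA] PP_lin[OF t t'] klin_comp[OF PP_lin(4)[OF t t'] klin_act2])
  also have "\<dots> = sum_list [a00 * psi \<theta> \<theta>' (act c hm2) (act d hm1). (hm2, a0) \<leftarrow> rho a, (hm1, a00) \<leftarrow> rho a0]"
    by (simp add: \<Phi>_def psi_act[OF t t'] sum_list_const_mult sum_list_concat' o_def split_def)
  finally show ?thesis .
qed


lemma CTC: "(\<And>b. lin_to_tensor sC sC sA (\<lambda>a. g a b)) \<Longrightarrow> (\<And>a. lin_to_tensor sC sC sA (g a)) \<Longrightarrow>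
    lin_to_tensor sC sC sA (\<lambda>x. concat (map (\<lambda>(a, b). g a b) (DC x)))"
  by (rule CT[OF linDC])

lemma CT3:
  assumes "\<And>b e. lin_to_tensor sC sC sA (\<lambda>a. g a b e)" "\<And>a e. lin_to_tensor sC sC sA (\<lambda>b. g a b e)"
    "\<And>a b. lin_to_tensor sC sC sA (g a b)"
  shows "teq2 sC sA (concat (map (\<lambda>(x, y). concat (map (\<lambda>(x1, x2). g x1 x2 y) (DC x))) (DC c)))
                    (concat (map (\<lambda>(x, y). concat (map (\<lambda>(y1, y2). g x y1 y2) (DC y))) (DC c)))"
  using T3[OF coassC, where g=g, OF assms] by (simp add: concat_map_concat o_def split_def)

definition B1 where "B1 F c = concat (map (\<lambda>(p, w4). concat (map (\<lambda>(q, w3). concat (map (\<lambda>(w1, w2).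
    F w1 w2 w3 w4) (DC q))) (DC p))) (DC c))"
definition B2 where "B2 F c = concat (map (\<lambda>(p, w4). concat (map (\<lambda>(w1, r). concat (map (\<lambda>(w2, w3).
    F w1 w2 w3 w4) (DC r))) (DC p))) (DC c))"
definition B3 where "B3 F c = concat (map (\<lambda>(w1, s). concat (map (\<lambda>(r, w4). concat (map (\<lambda>(w2, w3).
    F w1 w2 w3 w4) (DC r))) (DC s))) (DC c))"
definition B4 where "B4 F c = concat (map (\<lambda>(q, y). concat (map (\<lambda>(w1, w2). concat (map (\<lambda>(w3, w4).
    F w1 w2 w3 w4) (DC y))) (DC q))) (DC c))"

context
  fixes F :: "'c \<Rightarrow> 'c \<Rightarrow> 'c \<Rightarrow> 'c \<Rightarrow> ('c \<times> 'a) list"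
  assumes F1: "\<And>w2 w3 w4. lin_to_tensor sC sC sA (\<lambda>w1. F w1 w2 w3 w4)"
    and F2: "\<And>w1 w3 w4. lin_to_tensor sC sC sA (\<lambda>w2. F w1 w2 w3 w4)"
    and F3: "\<And>w1 w2 w4. lin_to_tensor sC sC sA (\<lambda>w3. F w1 w2 w3 w4)"
    and F4: "\<And>w1 w2 w3. lin_to_tensor sC sC sA (\<lambda>w4. F w1 w2 w3 w4)"
begin

lemma M1: "teq2 sC sA (B1 F c) (B4 F c)"
proof -
  have "teq2 sC sA (B1 F c) (concat (map (\<lambda>(q, y). concat (map (\<lambda>(w3, w4). concat (map (\<lambda>(w1, w2).
    F w1 w2 w3 w4) (DC q))) (DC y))) (DC c)))"
    unfolding B1_def
    by (rule CT3[where g="\<lambda>q w3 w4. concat (map (\<lambda>(w1, w2). F w1 w2 w3 w4) (DC q))"])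
       (intro CTC lin_concat2 F1 F2 F3 F4)+
  also have "teq2 sC sA \<dots> (B4 F c)"
    unfolding B4_def split_def
    by (rule teq2_concat) (rule teq2_swap)
  finally show ?thesis .
qed

lemma M2: "teq2 sC sA (B1 F c) (B2 F c)"
  unfolding B1_def B2_def
  by (rule teq2_concat, clarify, rule CT3) (intro F1 F2 F3 F4)+

lemma M3: "teq2 sC sA (B2 F c) (B3 F c)"
  unfolding B2_def B3_def
  by (rule CT3[where g="\<lambda>w1 r w4. concat (map (\<lambda>(w2, w3). F w1 w2 w3 w4) (DC r))"])
     (intro CTC lin_concat2 F1 F2 F3 F4)+

end


lemma cond2:
  assumes t: "\<theta> \<in> VV" and t': "\<theta>' \<in> VV"
  shows "teq2 sC sA [(c1, psi \<theta> \<theta>' c2 d). (c1, c2) \<leftarrow> DC c]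
           [(act d2 hm1, a0). (d1, d2) \<leftarrow> DC d, (hm1, a0) \<leftarrow> rho (psi \<theta> \<theta>' c d1)]"
proof -
  define E :: "'c \<Rightarrow> 'c \<Rightarrow> 'c \<Rightarrow> 'c \<Rightarrow> ('c \<times> 'a) list" where "E w1 w2 w3 w4 = [(w1, \<theta> w4 d * \<theta>' w2 w3)]" for w1 w2 w3 w4
  define G :: "'c \<Rightarrow> 'c \<Rightarrow> 'c \<Rightarrow> 'c \<Rightarrow> ('c \<times> 'a) list" where "G w1 w2 w3 w4 = concat (map (\<lambda>(h', b'). [(act w3 h', \<theta> w4 d * b')]) (rho (\<theta>' w1 w2)))" for w1 w2 w3 w4
  have E1: "\<And>w2 w3 w4. lin_to_tensor sC sC sA (\<lambda>w1. E w1 w2 w3 w4)"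
    and E2: "\<And>w1 w3 w4. lin_to_tensor sC sC sA (\<lambda>w2. E w1 w2 w3 w4)"
    and E3: "\<And>w1 w2 w4. lin_to_tensor sC sC sA (\<lambda>w3. E w1 w2 w3 w4)"
    and E4: "\<And>w1 w2 w3. lin_to_tensor sC sC sA (\<lambda>w4. E w1 w2 w3 w4)"
    unfolding E_def
    by (intro lin_pair_l lin_pair_r klin_id klin_mult_l[OF algA V3_lin1[OF t']] klin_mult_l[OF algA V3_lin2[OF t']]
        klin_mult_r[OF algA V3_lin1[OF t]])+
  have G1: "\<And>w2 w3 w4. lin_to_tensor sC sC sA (\<lambda>w1. G w1 w2 w3 w4)"
    and G2: "\<And>w1 w3 w4. lin_to_tensor sC sC sA (\<lambda>w2. G w1 w2 w3 w4)"
    and G3: "\<And>w1 w2 w4. lin_to_tensor sC sC sA (\<lambda>w3. G w1 w2 w3 w4)"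
    and G4: "\<And>w1 w2 w3. lin_to_tensor sC sC sA (\<lambda>w4. G w1 w2 w3 w4)"
    unfolding G_def
    by (intro CT[OF lin_comp[OF linrho V3_lin1[OF t']]] CT[OF lin_comp[OF linrho V3_lin2[OF t']]]
        lin_concat2 lin_pair_l lin_pair_r klin_act1 klin_act2 klin_mult_id_r[OF algA]
        klin_mult_r[OF algA V3_lin1[OF t]])+
  have Lx: "teq2 sC sA [(c1, psi \<theta> \<theta>' c2 d)]
      (concat (map (\<lambda>(r, w4). concat (map (\<lambda>(w2, w3). E c1 w2 w3 w4) (DC r))) (DC c2)))" for c1 c2
  proof -
    have "psi \<theta> \<theta>' c2 d = sum_list [\<theta> c3 d * \<theta>' c1' c2'. (x, c3) \<leftarrow> DC c2, (c1', c2') \<leftarrow> DC x]"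
      by (simp add: psi_def psi_nested)
    then show ?thesis
      using teq2_pair_sum[of sC sA c1 "[\<theta> c3 d * \<theta>' c1' c2'. (x, c3) \<leftarrow> DC c2, (c1', c2') \<leftarrow> DC x]"]
      by (simp add: E_def map_concat o_def split_def)
  qed
  have L: "teq2 sC sA [(c1, psi \<theta> \<theta>' c2 d). (c1, c2) \<leftarrow> DC c] (B3 E c)"
    unfolding B3_def
    by (subst map_as_concat, rule teq2_concat) (clarify, rule Lx)
  have Rm: "teq2 sH sA (rho (psi \<theta> \<theta>' c d1))
     (concat (map (\<lambda>(x, c3). concat (map (\<lambda>(c1, c2).
        [(h * h', a' * b'). (h, a') \<leftarrow> rho (\<theta> c3 d1), (h', b') \<leftarrow> rho (\<theta>' c1 c2)]) (DC x))) (DC c)))" for d1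
  proof -
    have "teq2 sH sA (rho (psi \<theta> \<theta>' c d1)) (concat (map (\<lambda>(x, c3). rho (sum_list (map (\<lambda>(c1, c2). \<theta> c3 d1 * \<theta>' c1 c2) (DC x)))) (DC c)))"
      unfolding psi_def by (rule lin_sum2[OF linrho])
    also have "teq2 sH sA \<dots> (concat (map (\<lambda>(x, c3). concat (map (\<lambda>(c1, c2). rho (\<theta> c3 d1 * \<theta>' c1 c2)) (DC x))) (DC c)))"
      by (rule teq2_concat_pair, rule lin_sum2[OF linrho])
    also have "teq2 sH sA \<dots> (concat (map (\<lambda>(x, c3). concat (map (\<lambda>(c1, c2).
        [(h * h', a' * b'). (h, a') \<leftarrow> rho (\<theta> c3 d1), (h', b') \<leftarrow> rho (\<theta>' c1 c2)]) (DC x))) (DC c)))"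
      by (rule teq2_concat_pair, rule teq2_concat_pair, rule multrho)
    finally show ?thesis .
  qed
  have R1: "teq2 sC sA [(act d2 hm1, a0). (d1, d2) \<leftarrow> DC d, (hm1, a0) \<leftarrow> rho (psi \<theta> \<theta>' c d1)]
     (concat (map (\<lambda>(d1, d2). concat (map (\<lambda>(h, a0). [(act d2 h, a0)]) (concat (map (\<lambda>(x, c3). concat (map (\<lambda>(c1, c2).
        [(h * h', a' * b'). (h, a') \<leftarrow> rho (\<theta> c3 d1), (h', b') \<leftarrow> rho (\<theta>' c1 c2)]) (DC x))) (DC c))))) (DC d)))"
  proof -
    have e: "[(act d2 hm1, a0). (d1, d2) \<leftarrow> DC d, (hm1, a0) \<leftarrow> rho (psi \<theta> \<theta>' c d1)] =
       concat (map (\<lambda>(d1, d2). concat (map (\<lambda>(h, a0). [(act d2 h, a0)]) (rho (psi \<theta> \<theta>' c d1)))) (DC d))"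
      by (simp add: split_def)
    show ?thesis unfolding e
      by (rule teq2_concat_pair, rule T2[OF Rm])
         (intro lin_pair_l lin_pair_r klin_act2 klin_id)+
  qed
  have R2: "teq2 sC sA (concat (map (\<lambda>(d1, d2). concat (map (\<lambda>(h, a0). [(act d2 h, a0)]) (concat (map (\<lambda>(x, c3). concat (map (\<lambda>(c1, c2).
        [(h * h', a' * b'). (h, a') \<leftarrow> rho (\<theta> c3 d1), (h', b') \<leftarrow> rho (\<theta>' c1 c2)]) (DC x))) (DC c))))) (DC d)))
     (concat (map (\<lambda>(x, c3). concat (map (\<lambda>(c1, c2). concat (map (\<lambda>(d1, d2).
        concat (map (\<lambda>(h, a'). concat (map (\<lambda>(h', b'). [(act (act d2 h) h', a' * b')]) (rho (\<theta>' c1 c2)))) (rho (\<theta> c3 d1)))) (DC d))) (DC x))) (DC c)))"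
    apply (rule teq2_tvI)
    apply (simp add: tv_concat tv_map concat_map_concat map_concat sum_list_concat' sum_list_map_concat o_def split_def act_mult)
    apply (rule move2)
    done
  have X: "teq2 sC sA (concat (map (\<lambda>(d1, d2). concat (map (\<lambda>(h, a'). concat (map (\<lambda>(h', b').
        [(act (act d2 h) h', a' * b')]) (rho (\<theta>' c1 c2)))) (rho (\<theta> c3 d1)))) (DC d)))
      (concat (map (\<lambda>(w3, w4). G c1 c2 w3 w4) (DC c3)))" for c1 c2 c3
  proof -
    have T: "teq2 sC sA
        (concat (map (\<lambda>(y, a'). concat (map (\<lambda>(h', b'). [(act y h', a' * b')]) (rho (\<theta>' c1 c2))))
            [(act d2 hm1, a0). (d1, d2) \<leftarrow> DC d, (hm1, a0) \<leftarrow> rho (\<theta> c3 d1)]))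
        (concat (map (\<lambda>(y, a'). concat (map (\<lambda>(h', b'). [(act y h', a' * b')]) (rho (\<theta>' c1 c2))))
            [(y1, \<theta> y2 d). (y1, y2) \<leftarrow> DC c3]))"
      by (rule T2[OF teq2_sym[OF V3_c2[OF t]]])
         (intro lin_concat2 lin_pair_l lin_pair_r klin_act1 klin_mult_id_l[OF algA])+
    have e1: "concat (map (\<lambda>(d1, d2). concat (map (\<lambda>(h, a'). concat (map (\<lambda>(h', b').
        [(act (act d2 h) h', a' * b')]) (rho (\<theta>' c1 c2)))) (rho (\<theta> c3 d1)))) (DC d)) =
       concat (map (\<lambda>(y, a'). concat (map (\<lambda>(h', b'). [(act y h', a' * b')]) (rho (\<theta>' c1 c2))))
            [(act d2 hm1, a0). (d1, d2) \<leftarrow> DC d, (hm1, a0) \<leftarrow> rho (\<theta> c3 d1)])"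
      by (simp add: concat_map_concat concat_concat' map_concat o_def split_def)
    have e2: "concat (map (\<lambda>(w3, w4). G c1 c2 w3 w4) (DC c3)) =
       concat (map (\<lambda>(y, a'). concat (map (\<lambda>(h', b'). [(act y h', a' * b')]) (rho (\<theta>' c1 c2))))
            [(y1, \<theta> y2 d). (y1, y2) \<leftarrow> DC c3])"
      by (simp add: G_def concat_map_concat concat_concat' map_concat o_def split_def)
    show ?thesis unfolding e1 e2 by (rule T)
  qed
  have R3: "teq2 sC sA (concat (map (\<lambda>(x, c3). concat (map (\<lambda>(c1, c2). concat (map (\<lambda>(d1, d2).
        concat (map (\<lambda>(h, a'). concat (map (\<lambda>(h', b'). [(act (act d2 h) h', a' * b')]) (rho (\<theta>' c1 c2)))) (rho (\<theta> c3 d1)))) (DC d))) (DC x))) (DC c)))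
      (B4 G c)"
    unfolding B4_def by (rule teq2_concat_pair, rule teq2_concat_pair, rule X)
  have Y: "teq2 sC sA (concat (map (\<lambda>(w2, w3). G w1 w2 w3 w4) (DC r)))
      (concat (map (\<lambda>(u1, u2). E u1 u2 r w4) (DC w1)))" for w1 r w4
  proof -
    have T: "teq2 sC sA
        (concat (map (\<lambda>(y, b). [(y, \<theta> w4 d * b)])
            [(act r2 hm1, a0). (r1, r2) \<leftarrow> DC r, (hm1, a0) \<leftarrow> rho (\<theta>' w1 r1)]))
        (concat (map (\<lambda>(y, b). [(y, \<theta> w4 d * b)]) [(u1, \<theta>' u2 r). (u1, u2) \<leftarrow> DC w1]))"
      by (rule T2[OF teq2_sym[OF V3_c2[OF t']]])
         (intro lin_pair_l lin_pair_r klin_id klin_mult_id_r[OF algA])+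
    have e1: "concat (map (\<lambda>(w2, w3). G w1 w2 w3 w4) (DC r)) =
        concat (map (\<lambda>(y, b). [(y, \<theta> w4 d * b)])
            [(act r2 hm1, a0). (r1, r2) \<leftarrow> DC r, (hm1, a0) \<leftarrow> rho (\<theta>' w1 r1)])"
      by (simp add: G_def concat_map_concat concat_concat' map_concat o_def split_def)
    have e2: "concat (map (\<lambda>(u1, u2). E u1 u2 r w4) (DC w1)) =
        concat (map (\<lambda>(y, b). [(y, \<theta> w4 d * b)]) [(u1, \<theta>' u2 r). (u1, u2) \<leftarrow> DC w1])"
      by (simp add: E_def concat_map_concat concat_concat' map_concat o_def split_def)
    show ?thesis unfolding e1 e2 by (rule T)
  qed
  have R4: "teq2 sC sA (B2 G c) (B1 E c)"
    unfolding B1_def B2_def by (rule teq2_concat_pair, rule teq2_concat_pair, rule Y)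
  have "teq2 sC sA [(act d2 hm1, a0). (d1, d2) \<leftarrow> DC d, (hm1, a0) \<leftarrow> rho (psi \<theta> \<theta>' c d1)] (B4 G c)"
    using teq2_trans[OF teq2_trans[OF R1 R2] R3] .
  also have "teq2 sC sA (B4 G c) (B1 G c)" by (rule teq2_sym[OF M1[OF G1 G2 G3 G4]])
  also have "teq2 sC sA (B1 G c) (B2 G c)" by (rule M2[OF G1 G2 G3 G4])
  also note R4
  also have "teq2 sC sA (B1 E c) (B2 E c)" by (rule M2[OF E1 E2 E3 E4])
  also have "teq2 sC sA (B2 E c) (B3 E c)" by (rule M3[OF E1 E2 E3 E4])
  finally show ?thesis by (rule teq2_trans[OF L teq2_sym])
qed


lemma kop_psi: "\<theta> \<in> VV \<Longrightarrow> \<theta>' \<in> VV \<Longrightarrow> kop_prod DC act rho \<theta> \<theta>' = psi \<theta> \<theta>'"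
  by (intro ext) (simp add: formula psi_nested psi_def)

lemma closure:
  assumes t: "\<theta> \<in> VV" and t': "\<theta>' \<in> VV"
  shows "kop_prod DC act rho \<theta> \<theta>' \<in> VV"
proof -
  have e: "psi \<theta> \<theta>' = (\<lambda>c d. sum_list [\<theta> c3 d * \<theta>' c1 c2. (x, c3) \<leftarrow> DC c, (c1, c2) \<leftarrow> DC x])"
    by (intro ext) (simp add: psi_nested psi_def)
  have "k_bilinear sC sA (psi \<theta> \<theta>')" unfolding e by (rule psi_bilin[OF t t'])
  then show ?thesis unfolding kop_psi[OF t t'] V3_def
    using cond1[OF t t'] cond2[OF t t'] by blast
qed

end

theorem lemma2p1p6:
  fixes sH :: "'k::comm_ring_1 \<Rightarrow> 'h::ring_1 \<Rightarrow> 'h"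
    and DH :: "'h \<Rightarrow> ('h \<times> 'h) list" and eH :: "'h \<Rightarrow> 'k"
    and sA :: "'k \<Rightarrow> 'a::ring_1 \<Rightarrow> 'a" and rho :: "'a \<Rightarrow> ('h \<times> 'a) list"
    and sC :: "'k \<Rightarrow> 'c::ab_group_add \<Rightarrow> 'c" and DC :: "'c \<Rightarrow> ('c \<times> 'c) list"
    and eC :: "'c \<Rightarrow> 'k" and act :: "'c \<Rightarrow> 'h \<Rightarrow> 'c"
  assumes "doi_hopf_datum sH DH eH sA rho sC DC eC act"
  shows "(\<forall>\<theta> \<in> V3 sH sA rho sC DC act. \<forall>\<theta>' \<in> V3 sH sA rho sC DC act.
            kop_prod DC act rho \<theta> \<theta>' \<in> V3 sH sA rho sC DC act \<and>
            (\<forall>c d. kop_prod DC act rho \<theta> \<theta>' c d =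
               sum_list [\<theta> c3 d * \<theta>' c1 c2. (x, c3) \<leftarrow> DC c, (c1, c2) \<leftarrow> DC x]))
       \<and> (\<forall>\<theta> \<in> V3 sH sA rho sC DC act. normalized sA DC eC \<theta> \<longrightarrow>
            (\<forall>\<theta>' \<in> V3 sH sA rho sC DC act. kop_prod DC act rho \<theta>' \<theta> = \<theta>') \<and>
            kop_prod DC act rho \<theta> \<theta> = \<theta>)"
proof -
  interpret doi sH DH eH sA rho sC DC eC act by unfold_locales (rule assms)
  show ?thesis using closure formula right_unit by blast
qed

end
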